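(* Let $\Phi:I\to O$ be a linear map. Then $\Phi$ is completely positive if and only if $C_\Phi\in\mathcal{L}(\mathcal{M}_\Phi)$ is a positive operator on the Hilbert $O^{op}$-module $\mathcal{M}_\Phi$, i.e. $\langle \xi, C_\Phi(\xi)\rangle_{O^{op}}\ge 0$ for all $\xi\in\mathcal{M}_\Phi$.
   Context: All Hilbert spaces are finite dimensional and inner products are linear in the second variable. Let $H_{in}=\bigoplus_a H^a_{in}$ and $H_{out}=\bigoplus_b H^b_{out}$ be finite direct sums of finite-dimensional Hilbert spaces, and $I=\bigoplus_a B(H^a_{in})\subseteq B(H_{in})$, $O=\bigoplus_b B(H^b_{out})\subseteq B(H_{out})$. Let $\{e^a_i\}_i$ be an orthonormal basis of $H^a_{in}$ and $e^a_{ij}=\theta_{e^a_i,e^a_j}$ the corresponding matrix units of $B(H^a_{in})$, where $\theta_{\xi,\eta}(\eta')=\langle\eta,\eta'\rangle\xi$. $O^{op}$ denotes the opposite algebra of $O$: same vector space and involution, with product $a*b=ba$; it is a C*-algebra. A (right) Hilbert $A$-module over a C*-algebra $A$ is a right $A$-module with an $A$-valued inner product $\langle\cdot,\cdot\rangle_A$ (positive definite, $\langle x,y\rangle_A=\langle y,x\rangle_A^*$, $A$-linear in the second variable), complete for $\|x\|=\|\langle x,x\rangle_A\|^{1/2}$; $\mathcal{L}(\mathcal{M})$ denotes the adjointable $A$-linear operators. Let $\mathcal{M}_\Phi=H_{in}\otimes O^{op}$, the right Hilbert $O^{op}$-module with right action $(\xi\otimes a)*x=\xi\otimes(a*x)$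 and inner product $\langle\xi\otimes a,\eta\otimes b\rangle_{O^{op}}=\langle\xi,\eta\rangle\, a^* * b$. For a linear map $\Phi:I\to O$, $C_\Phi\in\mathcal{L}(\mathcal{M}_\Phi)$ is the $O^{op}$-linear operator determined by $C_\Phi(e^a_j\otimes 1)=\sum_i e^a_i\otimes\Phi(e^a_{ji})$, where $\Phi(e^a_{ji})$ is regarded as an element of $O^{op}$ (equivalently, under $\mathcal{L}(\mathcal{M}_\Phi)\cong B(H_{in})\otimes O^{op}$, $C_\Phi=\sum_{i,j,a}e^a_{ij}\otimes\Phi(e^a_{ji})$). *)

theory Defs
  imports "Jordan_Normal_Form.Matrix"
begin

text \<open>H_in = C^N with N = sum of the block sizes ns, standard
orthonormal basis e_0,...,e_(N-1); block a occupies the global indices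
[off ns a, off ns a + ns!a).  Similarly H_out = C^M for the block sizes ms.
Operators on C^n are n x n complex matrices.\<close>

definition adj :: "complex mat \<Rightarrow> complex mat" where
  "adj A = mat (dim_col A) (dim_row A) (\<lambda>(i,j). cnj (A $$ (j,i)))"

definition off :: "nat list \<Rightarrow> nat \<Rightarrow> nat" where
  "off ns a = sum_list (take a ns)"

definition tdim :: "nat list \<Rightarrow> nat" where
  "tdim ns = sum_list ns"

definition same_block :: "nat list \<Rightarrow> nat \<Rightarrow> nat \<Rightarrow> bool" where
  "same_block ns i j = (\<exists>a<length ns. off ns a \<le> i \<and> i < off ns a + ns!a
                                  \<and> off ns a \<le> j \<and> j < off ns a + ns!a)"

text \<open>The block-diagonal algebra  (+)_a B(H^a) \<subseteq> B(C^N).\<close>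
definition blockalg :: "nat list \<Rightarrow> complex mat set" where
  "blockalg ns = {A \<in> carrier_mat (tdim ns) (tdim ns).
      \<forall>i<tdim ns. \<forall>j<tdim ns. \<not> same_block ns i j \<longrightarrow> A $$ (i,j) = 0}"

definition munit :: "nat \<Rightarrow> nat \<Rightarrow> nat \<Rightarrow> complex mat" where
  "munit n i j = mat n n (\<lambda>(r,c). if r = i \<and> c = j then 1 else 0)"

definition cstar_pos :: "complex mat set \<Rightarrow> (complex mat \<Rightarrow> complex mat \<Rightarrow> complex mat)
    \<Rightarrow> complex mat \<Rightarrow> bool" where
  "cstar_pos A mul x = (\<exists>a\<in>A. x = mul (adj a) a)"

definition op_mult :: "complex mat \<Rightarrow> complex mat \<Rightarrow> complex mat" where
  "op_mult a b = b * a"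

definition linear_on :: "complex mat set \<Rightarrow> (complex mat \<Rightarrow> complex mat) \<Rightarrow> bool" where
  "linear_on A \<Phi> = ((\<forall>x\<in>A. \<forall>y\<in>A. \<Phi> (x + y) = \<Phi> x + \<Phi> y) \<and>
                    (\<forall>c. \<forall>x\<in>A. \<Phi> (c \<cdot>\<^sub>m x) = c \<cdot>\<^sub>m \<Phi> x))"

text \<open>M_k(B), k x k matrices with entries X i j (each n x n), realised as a
(k n) x (k n) matrix acting on C^k \<otimes> C^n.\<close>
definition blockmat :: "nat \<Rightarrow> nat \<Rightarrow> (nat \<Rightarrow> nat \<Rightarrow> complex mat) \<Rightarrow> complex mat" where
  "blockmat k n X = mat (k*n) (k*n) (\<lambda>(r,c). X (r div n) (c div n) $$ (r mod n, c mod n))"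

definition Mk :: "nat \<Rightarrow> nat \<Rightarrow> complex mat set \<Rightarrow> complex mat set" where
  "Mk k n B = {blockmat k n X | X. \<forall>i<k. \<forall>j<k. X i j \<in> B}"

definition completely_positive ::
  "nat list \<Rightarrow> nat list \<Rightarrow> (complex mat \<Rightarrow> complex mat) \<Rightarrow> bool" where
  "completely_positive ns ms \<Phi> =
    (\<forall>k X. (\<forall>i<k. \<forall>j<k. X i j \<in> blockalg ns) \<longrightarrow>
       cstar_pos (Mk k (tdim ns) (blockalg ns)) (*) (blockmat k (tdim ns) X) \<longrightarrow>
       cstar_pos (Mk k (tdim ms) (blockalg ms)) (*)
                 (blockmat k (tdim ms) (\<lambda>i j. \<Phi> (X i j))))"

text \<open>Finite sum of m x m matrices f g over the list gs (matrices do not form a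
  comm_monoid_add type because of dimensions).\<close>
definition msum :: "nat \<Rightarrow> (nat \<Rightarrow> complex mat) \<Rightarrow> nat list \<Rightarrow> complex mat" where
  "msum m f gs = foldr (\<lambda>g acc. f g + acc) gs (0\<^sub>m m m)"

text \<open>The Hilbert O^op-module M_Phi = H_in \<otimes> O^op.  An element
  xi = sum_g e_g \<otimes> xi g  (g < N) is represented by its coefficient family xi.\<close>
definition Mmod :: "nat list \<Rightarrow> nat list \<Rightarrow> (nat \<Rightarrow> complex mat) set" where
  "Mmod ns ms = {\<xi>. (\<forall>g<tdim ns. \<xi> g \<in> blockalg ms) \<and> (\<forall>g\<ge>tdim ns. \<xi> g = 0\<^sub>m 0 0)}"

definition mod_ract :: "(nat \<Rightarrow> complex mat) \<Rightarrow> complex mat \<Rightarrow> (nat \<Rightarrow> complex mat)" where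
  "mod_ract \<xi> x = (\<lambda>g. op_mult (\<xi> g) x)"

text \<open>Inner product <xi \<otimes> a, eta \<otimes> b> = <xi,eta> a^* * b (opposite product),
  extended sesquilinearly; the basis e_g is orthonormal.\<close>
definition mod_inner :: "nat list \<Rightarrow> nat list \<Rightarrow> (nat \<Rightarrow> complex mat) \<Rightarrow> (nat \<Rightarrow> complex mat) \<Rightarrow> complex mat" where
  "mod_inner ns ms \<xi> \<eta> = msum (tdim ms) (\<lambda>g. op_mult (adj (\<xi> g)) (\<eta> g)) [0..<tdim ns]"

text \<open>C_Phi, the O^op-linear operator with
  C_Phi(e_j \<otimes> 1) = sum_i e_i \<otimes> Phi(e_ji)   (i, j in the same block).
  By O^op-linearity C_Phi(e_j \<otimes> x) = sum_i e_i \<otimes> (Phi(e_ji) * x).\<close>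
definition C_op :: "nat list \<Rightarrow> nat list \<Rightarrow> (complex mat \<Rightarrow> complex mat)
    \<Rightarrow> (nat \<Rightarrow> complex mat) \<Rightarrow> (nat \<Rightarrow> complex mat)" where
  "C_op ns ms \<Phi> \<xi> = (\<lambda>i. if i < tdim ns then
       msum (tdim ms) (\<lambda>j. op_mult (\<Phi> (munit (tdim ns) j i)) (\<xi> j))
          (filter (same_block ns i) [0..<tdim ns])
     else 0\<^sub>m 0 0)"

end

theory Submission
  imports Defs
begin

definition qf :: "nat \<Rightarrow> (nat\<Rightarrow>nat\<Rightarrow>complex) \<Rightarrow> (nat \<Rightarrow> complex) \<Rightarrow> complex" where
  "qf n A v = (\<Sum>r<n. \<Sum>c<n. cnj (v r) * A r c * v c)"

lemma sum_two_pts: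
  fixes f :: "nat \<Rightarrow> complex"
  assumes "a < n" "b < n" "a \<noteq> b"
  shows "(\<Sum>c<n. (if c = a then y1 else if c = b then y2 else 0) * f c) = y1 * f a + y2 * f b"
proof -
  have "(\<Sum>c<n. (if c = a then y1 else if c = b then y2 else 0) * f c)
     = (\<Sum>c<n. (if c = a then y1 * f a else 0) + (if c = b then y2 * f b else 0))"
    by (rule sum.cong) (use assms in auto)
  also have "\<dots> = y1 * f a + y2 * f b" using assms by (simp add: sum.distrib)
  finally show ?thesis .
qed

lemma qf2:
  assumes "a < n" "b < n" "a \<noteq> b"
  shows "qf n A (\<lambda>x. if x = a then x1 else if x = b then x2 else 0) =
    cnj x1 * A a a * x1 + cnj x1 * A a b * x2 + cnj x2 * A b a * x1 + cnj x2 * A b b * x2"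
proof -
  have "qf n A (\<lambda>x. if x = a then x1 else if x = b then x2 else 0) =
     (\<Sum>r<n. cnj (if r = a then x1 else if r = b then x2 else 0) * (\<Sum>c<n. (if c = a then x1 else if c = b then x2 else 0) * A r c))"
    unfolding qf_def by (simp add: sum_distrib_left mult_ac)
  also have "\<dots> = (\<Sum>r<n. cnj (if r = a then x1 else if r = b then x2 else 0) * (x1 * A r a + x2 * A r b))"
    using sum_two_pts[OF assms] by simp
  also have "\<dots> = (\<Sum>r<n. (if r = a then cnj x1 else if r = b then cnj x2 else 0) * (x1 * A r a + x2 * A r b))"
    by (rule sum.cong) auto
  also have "\<dots> = cnj x1 * (x1 * A a a + x2 * A a b) + cnj x2 * (x1 * A b a + x2 * A b b)"
    by (rule sum_two_pts[OF assms])
  finally show ?thesis by (simp add: algebra_simps)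
qed

lemma sum_one_pt:
  fixes f :: "nat \<Rightarrow> complex"
  assumes "a < n"
  shows "(\<Sum>c<n. f c * (if c = a then y else 0)) = f a * y"
proof -
  have "(\<Sum>c<n. f c * (if c = a then y else 0)) = (\<Sum>c<n. if c = a then f a * y else 0)"
    by (rule sum.cong) auto
  also have "\<dots> = f a * y" using assms by simp
  finally show ?thesis .
qed

lemma qf1:
  assumes "a < n"
  shows "qf n A (\<lambda>x. if x = a then x1 else 0) = cnj x1 * A a a * x1"
proof -
  have "qf n A (\<lambda>x. if x = a then x1 else 0) = (\<Sum>r<n. (\<Sum>c<n. A r c * (if c = a then x1 else 0)) * (if r = a then cnj x1 else 0))"
    unfolding qf_def by (rule sum.cong) (auto simp: sum_distrib_right sum_distrib_left mult_ac intro!: sum.cong)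
  also have "\<dots> = cnj x1 * A a a * x1" using assms by (simp add: sum_one_pt)
  finally show ?thesis .
qed

lemma psd_herm:
  assumes psd: "\<forall>v. 0 \<le> qf n A v" and r: "r < n" and c: "c < n"
  shows "A c r = cnj (A r c)"
proof (cases "r = c")
  case True
  have "0 \<le> qf n A (\<lambda>x. if x = r then 1 else 0)" using psd by blast
  then have "0 \<le> A r r" using qf1[OF r, of A 1] by simp
  then have "Im (A r r) = 0" by (simp add: less_eq_complex_def)
  then show ?thesis using True by (simp add: complex_eq_iff)
next
  case False
  have d1: "0 \<le> A r r" "0 \<le> A c c"
    using psd qf1[OF r, of A 1] qf1[OF c, of A 1] by (metis complex_cnj_one mult_1_left mult_1_right)+
  have "0 \<le> qf n A (\<lambda>x. if x = r then 1 else if x = c then 1 else 0)" using psd by blast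
  then have h1: "0 \<le> A r r + A r c + A c r + A c c" using qf2[OF r c False, of A 1 1] by simp
  have "0 \<le> qf n A (\<lambda>x. if x = r then 1 else if x = c then \<i> else 0)" using psd by blast
  then have h2: "0 \<le> A r r + \<i> * A r c - \<i> * A c r + A c c" using qf2[OF r c False, of A 1 \<i>]
    by (simp add: algebra_simps)
  from d1 h1 h2 show ?thesis by (simp add: less_eq_complex_def complex_eq_iff)
qed

lemma qf_Suc:
  "qf (Suc n) A v = cnj (v 0) * A 0 0 * v 0 + cnj (v 0) * (\<Sum>c<n. A 0 (Suc c) * v (Suc c))
     + (\<Sum>r<n. cnj (v (Suc r)) * A (Suc r) 0) * v 0 + qf n (\<lambda>r c. A (Suc r) (Suc c)) (\<lambda>r. v (Suc r))"
  unfolding qf_def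
  apply (simp only: sum.lessThan_Suc_shift)
  by (simp add: sum.distrib sum_distrib_left sum_distrib_right mult_ac)

lemma qf_diff:
  "qf n (\<lambda>r c. B r c - u r * w c) v = qf n B v - (\<Sum>r<n. cnj (v r) * u r) * (\<Sum>c<n. w c * v c)"
  unfolding qf_def
  by (simp add: algebra_simps sum_subtractf sum_distrib_left sum_distrib_right)

lemma chol:
  "\<And>A R. (\<forall>r c. R r c \<longrightarrow> R c r) \<Longrightarrow> (\<forall>r c d. R r c \<longrightarrow> R c d \<longrightarrow> R r d) \<Longrightarrow>
    (\<forall>r<n. \<forall>c<n. A r c \<noteq> 0 \<longrightarrow> R r c) \<Longrightarrow> (\<forall>v. 0 \<le> qf n A v) \<Longrightarrow>
    \<exists>L. (\<forall>r<n. \<forall>c<n. A r c = (\<Sum>p<n. cnj (L p r) * L p c)) \<and> (\<forall>r<n. \<forall>c<n. L r c \<noteq> 0 \<longrightarrow> R r c)"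
proof (induction n)
  case 0
  show ?case by (intro exI[of _ "\<lambda>_ _. 0"]) simp
next
  case (Suc n A R)
  note sym = Suc.prems(1) and trans = Suc.prems(2) and pat = Suc.prems(3) and psd = Suc.prems(4)
  have herm: "\<And>r c. r < Suc n \<Longrightarrow> c < Suc n \<Longrightarrow> A c r = cnj (A r c)"
    by (rule psd_herm[OF psd])
  define \<alpha> where "\<alpha> = A 0 0"
  have a0: "0 \<le> \<alpha>"
  proof -
    have "0 \<le> qf (Suc n) A (\<lambda>x. if x = 0 then 1 else 0)" by (rule psd[rule_format])
    then show ?thesis using qf1[of 0 "Suc n" A 1] unfolding \<alpha>_def by simp
  qed
  define R' where "R' = (\<lambda>r c. R (Suc r) (Suc c))"
  have sym': "\<forall>r c. R' r c \<longrightarrow> R' c r"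
    unfolding R'_def using sym by simp
  have trans': "\<forall>r c d. R' r c \<longrightarrow> R' c d \<longrightarrow> R' r d"
    unfolding R'_def
  proof (intro allI impI)
    fix r c d assume "R (Suc r) (Suc c)" "R (Suc c) (Suc d)"
    then show "R (Suc r) (Suc d)" by (rule trans[rule_format])
  qed
  show ?case
  proof (cases "\<alpha> = 0")
    case True
    have g0: "A 0 (Suc c) = 0" if c: "c < n" for c
    proof (rule ccontr)
      assume ne: "A 0 (Suc c) \<noteq> 0"
      define \<beta> where "\<beta> = A (Suc c) 0"
      have hb: "A 0 (Suc c) = cnj \<beta>" using herm[of "Suc c" 0] c unfolding \<beta>_def by simp
      define d where "d = A (Suc c) (Suc c)"
      have d0: "0 \<le> d"
      proof -
        have "0 \<le> qf (Suc n) A (\<lambda>x. if x = Suc c then 1 else 0)" by (rule psd[rule_format])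
        then show ?thesis using qf1[of "Suc c" "Suc n" A 1] c unfolding d_def by simp
      qed
      define t where "t = 1 / (Re d + 1)"
      have "0 \<le> qf (Suc n) A (\<lambda>x. if x = 0 then 1 else if x = Suc c then - of_real t * \<beta> else 0)"
        by (rule psd[rule_format])
      also have "\<dots> = - of_real t * cnj \<beta> * \<beta> - of_real t * cnj \<beta> * \<beta> + of_real t * of_real t * cnj \<beta> * \<beta> * d"
        using qf2[of 0 "Suc n" "Suc c" A 1 "- of_real t * \<beta>"] c True
        unfolding \<alpha>_def hb d_def[symmetric] \<beta>_def[symmetric] by (simp add: algebra_simps)
      also have "\<dots> = of_real ((cmod \<beta>)^2 * (t * t * Re d - 2 * t))"
      proof -
        have A: "cnj \<beta> * \<beta> = of_real ((cmod \<beta>)^2)" using complex_norm_square[of \<beta>] by (simp add: mult.commute)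
        have B: "d = of_real (Re d)" using d0 by (simp add: less_eq_complex_def complex_eq_iff)
        have "- of_real t * cnj \<beta> * \<beta> - of_real t * cnj \<beta> * \<beta> + of_real t * of_real t * cnj \<beta> * \<beta> * d
           = (cnj \<beta> * \<beta>) * (of_real t * of_real t * d - 2 * of_real t)" by (simp add: algebra_simps)
        also have "\<dots> = of_real ((cmod \<beta>)^2) * (of_real t * of_real t * of_real (Re d) - 2 * of_real t)"
          by (subst A, subst B) (rule refl)
        also have "\<dots> = of_real ((cmod \<beta>)^2 * (t * t * Re d - 2 * t))" by simp
        finally show ?thesis .
      qed
      finally have "0 \<le> (cmod \<beta>)^2 * (t * t * Re d - 2 * t)"
        by (simp add: less_eq_complex_def)
      moreover have "(cmod \<beta>)^2 > 0" using ne hb by simp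
      moreover have "t * t * Re d - 2 * t < 0"
      proof -
        have rd: "Re d \<ge> 0" using d0 by (simp add: less_eq_complex_def)
        have tp: "t > 0" unfolding t_def using rd by simp
        have "t * Re d < 1" unfolding t_def using rd by (simp add: field_simps)
        then have "t * (t * Re d) < t * 2" using tp by simp
        then show ?thesis by (simp add: algebra_simps)
      qed
      ultimately show False by (smt (verit) mult_pos_neg)
    qed
    define A' where "A' = (\<lambda>r c. A (Suc r) (Suc c))"
    have pat': "\<forall>r<n. \<forall>c<n. A' r c \<noteq> 0 \<longrightarrow> R' r c"
    proof (intro allI impI)
      fix r c assume "r < n" "c < n" "A' r c \<noteq> 0"
      then show "R' r c" using pat[rule_format, of "Suc r" "Suc c"] unfolding A'_def R'_def by simp
    qed
    have psd': "\<forall>v. 0 \<le> qf n A' v"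
    proof
      fix v
      have "0 \<le> qf (Suc n) A (\<lambda>x. case x of 0 \<Rightarrow> 0 | Suc r \<Rightarrow> v r)" by (rule psd[rule_format])
      then show "0 \<le> qf n A' v" unfolding qf_Suc A'_def by simp
    qed
    obtain L' where L': "\<forall>r<n. \<forall>c<n. A' r c = (\<Sum>p<n. cnj (L' p r) * L' p c)"
      "\<forall>r<n. \<forall>c<n. L' r c \<noteq> 0 \<longrightarrow> R' r c"
      using Suc.IH[OF sym' trans' pat' psd'] by blast
    define L where "L = (\<lambda>p c. case p of 0 \<Rightarrow> 0 | Suc p' \<Rightarrow> (case c of 0 \<Rightarrow> 0 | Suc c' \<Rightarrow> L' p' c'))"
    have "\<forall>r<Suc n. \<forall>c<Suc n. A r c = (\<Sum>p<Suc n. cnj (L p r) * L p c)"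
    proof (intro allI impI)
      fix r c assume r: "r < Suc n" and c: "c < Suc n"
      have s: "(\<Sum>p<Suc n. cnj (L p r) * L p c) = (\<Sum>p<n. cnj (L (Suc p) r) * L (Suc p) c)"
        by (simp only: sum.lessThan_Suc_shift) (simp add: L_def)
      show "A r c = (\<Sum>p<Suc n. cnj (L p r) * L p c)"
      proof (cases r)
        case 0
        then show ?thesis
        proof -
          have z: "\<And>p. L p 0 = 0" by (simp add: L_def split: nat.split)
          have "A 0 c = 0"
          proof (cases c)
            case 0 then show ?thesis using True by (simp add: \<alpha>_def)
          next
            case (Suc c') then show ?thesis using g0 c by simp
          qed
          then show ?thesis unfolding s using 0 z by simp
        qed
      next
        case (Suc r')
        have r': "r' < n" using r Suc by simp
        show ?thesis
        proof (cases c)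
          case 0
          have z: "\<And>p. L p 0 = 0" by (simp add: L_def split: nat.split)
          have "A (Suc r') 0 = cnj (A 0 (Suc r'))" using herm[of 0 "Suc r'"] r' by simp
          then have "A r c = 0" using g0[OF r'] Suc 0 by simp
          then show ?thesis unfolding s using 0 z by simp
        next
          case (Suc c')
          have c': "c' < n" using c Suc by simp
          have "(\<Sum>p<n. cnj (L (Suc p) r) * L (Suc p) c) = (\<Sum>p<n. cnj (L' p r') * L' p c')"
            using \<open>r = Suc r'\<close> Suc by (simp add: L_def)
          also have "\<dots> = A' r' c'" using L'(1) r' c' by simp
          finally show ?thesis unfolding s A'_def using \<open>r = Suc r'\<close> Suc by simp
        qed
      qed
    qed
    moreover have "\<forall>r<Suc n. \<forall>c<Suc n. L r c \<noteq> 0 \<longrightarrow> R r c"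
    proof (intro allI impI)
      fix r c assume r: "r < Suc n" and c: "c < Suc n" and ne: "L r c \<noteq> 0"
      then obtain r' c' where rc: "r = Suc r'" "c = Suc c'" "L' r' c' \<noteq> 0"
        unfolding L_def by (cases r; cases c) auto
      then have "R' r' c'" using L'(2) r c by simp
      then show "R r c" using rc unfolding R'_def by simp
    qed
    ultimately show ?thesis by blast
  next
    case False
    have aR: "\<alpha> = of_real (Re \<alpha>)" using a0 by (simp add: less_eq_complex_def complex_eq_iff)
    have aP: "Re \<alpha> > 0" using a0 False by (simp add: less_eq_complex_def complex_eq_iff)
    define \<sigma> where "\<sigma> = complex_of_real (sqrt (Re \<alpha>))"
    have s0: "\<sigma> \<noteq> 0" using aP unfolding \<sigma>_def by simp
    have sc: "cnj \<sigma> = \<sigma>" unfolding \<sigma>_def by simp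
    have ss: "\<sigma> * \<sigma> = \<alpha>"
    proof -
      have "\<sigma> * \<sigma> = of_real (Re \<alpha>)" unfolding \<sigma>_def using aP by (simp flip: of_real_mult)
      also have "\<dots> = \<alpha>" using aR[symmetric] by simp
      finally show ?thesis .
    qed
    have ac: "cnj \<alpha> = \<alpha>" using aR by (metis complex_cnj_complex_of_real)
    define \<gamma> where "\<gamma> = (\<lambda>c. A 0 (Suc c))"
    define \<beta> where "\<beta> = (\<lambda>r. A (Suc r) 0)"
    have bg: "\<beta> r = cnj (\<gamma> r)" if "r < n" for r unfolding \<beta>_def \<gamma>_def using herm[of 0 "Suc r"] that by simp
    define A0 where "A0 = (\<lambda>r c. A (Suc r) (Suc c))"
    define A' where "A' = (\<lambda>r c. A0 r c - \<beta> r * (\<gamma> c / \<alpha>))"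
    have pat': "\<forall>r<n. \<forall>c<n. A' r c \<noteq> 0 \<longrightarrow> R' r c"
    proof (intro allI impI)
      fix r c assume r: "r < n" and c: "c < n" and ne: "A' r c \<noteq> 0"
      show "R' r c"
      proof (cases "A0 r c = 0")
        case True
        then have "\<beta> r \<noteq> 0" "\<gamma> c \<noteq> 0" using ne unfolding A'_def by auto
        then have "R (Suc r) 0" "R 0 (Suc c)" using pat[rule_format, of "Suc r" 0] pat[rule_format, of 0 "Suc c"] r c
          unfolding \<beta>_def \<gamma>_def by auto
        then show ?thesis unfolding R'_def by (rule trans[rule_format])
      next
        case False
        then show ?thesis using pat[rule_format, of "Suc r" "Suc c"] r c unfolding A0_def R'_def by simp
      qed
    qed
    have psd': "\<forall>v. 0 \<le> qf n A' v"
    proof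
      fix v
      define s where "s = (\<Sum>c<n. \<gamma> c * v c)"
      have cs: "(\<Sum>r<n. cnj (v r) * \<beta> r) = cnj s" unfolding s_def using bg by (simp add: mult.commute)
      have e1: "qf n A' v = qf n A0 v - cnj s * s / \<alpha>"
        unfolding A'_def qf_diff cs by (simp add: s_def sum_divide_distrib[symmetric] mult.commute)
      have "0 \<le> qf (Suc n) A (\<lambda>x. case x of 0 \<Rightarrow> - s / \<alpha> | Suc r \<Rightarrow> v r)" by (rule psd[rule_format])
      also have "qf (Suc n) A (\<lambda>x. case x of 0 \<Rightarrow> - s / \<alpha> | Suc r \<Rightarrow> v r)
          = cnj (- s / \<alpha>) * \<alpha> * (- s / \<alpha>) + cnj (- s / \<alpha>) * s + cnj s * (- s / \<alpha>) + qf n A0 v"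
        unfolding qf_Suc cs[symmetric] by (simp add: \<alpha>_def s_def \<gamma>_def \<beta>_def A0_def)
      also have "\<dots> = qf n A' v" unfolding e1 using False ac by (simp add: field_simps)
      finally show "0 \<le> qf n A' v" .
    qed
    obtain L' where L': "\<forall>r<n. \<forall>c<n. A' r c = (\<Sum>p<n. cnj (L' p r) * L' p c)"
      "\<forall>r<n. \<forall>c<n. L' r c \<noteq> 0 \<longrightarrow> R' r c"
      using Suc.IH[OF sym' trans' pat' psd'] by blast
    define L where "L = (\<lambda>p c. case p of 0 \<Rightarrow> (case c of 0 \<Rightarrow> \<sigma> | Suc c' \<Rightarrow> \<gamma> c' / \<sigma>)
        | Suc p' \<Rightarrow> (case c of 0 \<Rightarrow> 0 | Suc c' \<Rightarrow> L' p' c'))"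
    have "\<forall>r<Suc n. \<forall>c<Suc n. A r c = (\<Sum>p<Suc n. cnj (L p r) * L p c)"
    proof (intro allI impI)
      fix r c assume r: "r < Suc n" and c: "c < Suc n"
      have s: "(\<Sum>p<Suc n. cnj (L p r) * L p c) = cnj (L 0 r) * L 0 c + (\<Sum>p<n. cnj (L (Suc p) r) * L (Suc p) c)"
        by (simp only: sum.lessThan_Suc_shift)
      have z: "\<And>p. L (Suc p) 0 = 0" by (simp add: L_def)
      show "A r c = (\<Sum>p<Suc n. cnj (L p r) * L p c)"
      proof (cases r)
        case 0
        show ?thesis
        proof (cases c)
          case 0
          then show ?thesis unfolding s using \<open>r = 0\<close> z sc ss by (simp add: L_def \<alpha>_def)
        next
          case (Suc c')
          then show ?thesis unfolding s using \<open>r = 0\<close> z sc s0 by (simp add: L_def \<gamma>_def)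
        qed
      next
        case (Suc r')
        have r': "r' < n" using r Suc by simp
        show ?thesis
        proof (cases c)
          case 0
          then show ?thesis unfolding s using \<open>r = Suc r'\<close> z sc s0 bg[OF r'] by (simp add: L_def \<beta>_def)
        next
          case (Suc c')
          have c': "c' < n" using c Suc by simp
          have "(\<Sum>p<n. cnj (L (Suc p) r) * L (Suc p) c) = (\<Sum>p<n. cnj (L' p r') * L' p c')"
            using \<open>r = Suc r'\<close> Suc by (simp add: L_def)
          also have "\<dots> = A' r' c'" using L'(1) r' c' by simp
          finally have e: "(\<Sum>p<n. cnj (L (Suc p) r) * L (Suc p) c) = A' r' c'" .
          have "cnj (L 0 r) * L 0 c = \<beta> r' * (\<gamma> c' / \<alpha>)"
            using \<open>r = Suc r'\<close> Suc sc s0 bg[OF r'] ss[symmetric] by (simp add: L_def)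
          then show ?thesis unfolding s e A'_def A0_def using \<open>r = Suc r'\<close> Suc by simp
        qed
      qed
    qed
    moreover have "\<forall>r<Suc n. \<forall>c<Suc n. L r c \<noteq> 0 \<longrightarrow> R r c"
    proof (intro allI impI)
      fix r c assume r: "r < Suc n" and c: "c < Suc n" and ne: "L r c \<noteq> 0"
      show "R r c"
      proof (cases r)
        case 0
        show ?thesis
        proof (cases c)
          case 0 then show ?thesis using pat[rule_format, of 0 0] False \<open>r = 0\<close> by (simp add: \<alpha>_def)
        next
          case (Suc c')
          then have "A 0 (Suc c') \<noteq> 0" using ne \<open>r = 0\<close> by (simp add: L_def \<gamma>_def)
          then show ?thesis using pat[rule_format, of 0 "Suc c'"] c Suc \<open>r = 0\<close> by simp
        qed
      next
        case (Suc r')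
        then obtain c' where cc: "c = Suc c'" "L' r' c' \<noteq> 0" using ne unfolding L_def by (cases c) auto
        then have "R' r' c'" using L'(2) r c Suc by simp
        then show "R r c" using cc Suc unfolding R'_def by simp
      qed
    qed
    ultimately show ?thesis by blast
  qed
qed

lemma off_Suc: "a < length ns \<Longrightarrow> off ns (Suc a) = off ns a + ns ! a"
  unfolding off_def by (simp add: take_Suc_conv_app_nth)

lemma off_mono: "a \<le> b \<Longrightarrow> b \<le> length ns \<Longrightarrow> off ns a \<le> off ns b"
proof (induction b)
  case 0 then show ?case by simp
next
  case (Suc b)
  show ?case
  proof (cases "a = Suc b")
    case True then show ?thesis by simp
  next
    case False
    then have "off ns a \<le> off ns b" using Suc by simp
    also have "\<dots> \<le> off ns (Suc b)" using Suc.prems off_Suc[of b ns] by simp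
    finally show ?thesis .
  qed
qed

lemma off_len: "off ns (length ns) = tdim ns"
  unfolding off_def tdim_def by simp

lemma block_end: "a < length ns \<Longrightarrow> off ns a + ns ! a \<le> tdim ns"
  using off_Suc[of a ns] off_mono[of "Suc a" "length ns" ns] off_len[of ns] by simp

lemma block_unique:
  assumes "a < length ns" "b < length ns" "off ns a \<le> i" "i < off ns a + ns ! a"
    "off ns b \<le> i" "i < off ns b + ns ! b"
  shows "a = b"
proof (rule ccontr)
  assume "a \<noteq> b"
  then consider "a < b" | "b < a" by linarith
  then show False
  proof cases
    case 1
    then have "off ns (Suc a) \<le> off ns b" using assms by (intro off_mono) auto
    then show False using assms off_Suc[of a ns] by simp
  next
    case 2
    then have "off ns (Suc b) \<le> off ns a" using assms by (intro off_mono) auto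
    then show False using assms off_Suc[of b ns] by simp
  qed
qed

lemma sb_sym: "same_block ns i j \<Longrightarrow> same_block ns j i"
  unfolding same_block_def by blast

lemma sb_trans: "same_block ns i j \<Longrightarrow> same_block ns j l \<Longrightarrow> same_block ns i l"
proof -
  assume h1: "same_block ns i j" and h2: "same_block ns j l"
  from h1 obtain a where a: "a < length ns" "off ns a \<le> i" "i < off ns a + ns!a" "off ns a \<le> j" "j < off ns a + ns!a"
    unfolding same_block_def by blast
  from h2 obtain b where b: "b < length ns" "off ns b \<le> j" "j < off ns b + ns!b" "off ns b \<le> l" "l < off ns b + ns!b"
    unfolding same_block_def by blast
  have "a = b" using block_unique[of a ns b j] a b by simp
  then show ?thesis unfolding same_block_def using a b by blast
qed

lemma sb_lt: "same_block ns i j \<Longrightarrow> i < tdim ns \<and> j < tdim ns"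
  unfolding same_block_def using block_end by fastforce

lemma sb_refl_aux: "i < sum_list ns \<Longrightarrow> \<exists>a<length ns. off ns a \<le> i \<and> i < off ns a + ns ! a"
proof (induction ns arbitrary: i)
  case Nil then show ?case by simp
next
  case (Cons x xs)
  show ?case
  proof (cases "i < x")
    case True
    then show ?thesis by (intro exI[of _ 0]) (simp add: off_def)
  next
    case False
    then have "i - x < sum_list xs" using Cons.prems by simp
    then obtain a where "a < length xs" "off xs a \<le> i - x" "i - x < off xs a + xs ! a" using Cons.IH by blast
    then show ?thesis using False by (intro exI[of _ "Suc a"]) (auto simp: off_def)
  qed
qed

lemma sb_refl: "i < tdim ns \<Longrightarrow> same_block ns i i"
  using sb_refl_aux[of i ns] unfolding same_block_def tdim_def by blast

lemma msum_carrier: "(\<forall>g\<in>set gs. f g \<in> carrier_mat m m) \<Longrightarrow> msum m f gs \<in> carrier_mat m m"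
  unfolding msum_def by (induction gs) auto

lemma msum_index: "(\<forall>g\<in>set gs. f g \<in> carrier_mat m m) \<Longrightarrow> r < m \<Longrightarrow> c < m \<Longrightarrow>
   msum m f gs $$ (r,c) = (\<Sum>g\<leftarrow>gs. f g $$ (r,c))"
proof (induction gs)
  case Nil then show ?case by (simp add: msum_def)
next
  case (Cons g gs)
  have "msum m f (g # gs) = f g + msum m f gs" by (simp add: msum_def)
  moreover have "msum m f gs \<in> carrier_mat m m" using Cons.prems msum_carrier[of gs f m] by simp
  ultimately show ?case using Cons by simp
qed

lemma sum_list_upt_filter: "(\<Sum>g\<leftarrow>filter P [0..<n]. h g) = (\<Sum>g<n. if P g then h g else 0)"
  by (simp add: sum_list_map_filter' sum_set_upt_conv_sum_list_nat[symmetric] atLeast0LessThan)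

lemma sum_list_upt: "(\<Sum>g\<leftarrow>[0..<n]. h g) = (\<Sum>g<n. h g)"
  by (simp add: sum_set_upt_conv_sum_list_nat[symmetric] atLeast0LessThan)

lemma adj_carrier: "A \<in> carrier_mat n m \<Longrightarrow> adj A \<in> carrier_mat m n"
  unfolding adj_def by simp

lemma adj_index: "i < dim_col A \<Longrightarrow> j < dim_row A \<Longrightarrow> adj A $$ (i,j) = cnj (A $$ (j,i))"
  unfolding adj_def by simp

lemma adj_adj: "adj (adj A) = A"
  unfolding adj_def by (rule eq_matI) auto

lemma mult_index: "A \<in> carrier_mat n k \<Longrightarrow> B \<in> carrier_mat k m \<Longrightarrow> i < n \<Longrightarrow> j < m \<Longrightarrow>
  (A * B) $$ (i,j) = (\<Sum>p<k. A $$ (i,p) * B $$ (p,j))"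
  by (simp add: scalar_prod_def atLeast0LessThan)

lemma ba_carrier: "x \<in> blockalg ns \<Longrightarrow> x \<in> carrier_mat (tdim ns) (tdim ns)"
  unfolding blockalg_def by simp

lemma ba_zero_entry: "x \<in> blockalg ns \<Longrightarrow> i < tdim ns \<Longrightarrow> j < tdim ns \<Longrightarrow> \<not> same_block ns i j \<Longrightarrow> x $$ (i,j) = 0"
  unfolding blockalg_def by simp

lemma ba_I: "x \<in> carrier_mat (tdim ns) (tdim ns) \<Longrightarrow> (\<And>i j. i < tdim ns \<Longrightarrow> j < tdim ns \<Longrightarrow> \<not> same_block ns i j \<Longrightarrow> x $$ (i,j) = 0)
   \<Longrightarrow> x \<in> blockalg ns"
  unfolding blockalg_def by simp

lemma ba_zero: "0\<^sub>m (tdim ns) (tdim ns) \<in> blockalg ns"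
  by (rule ba_I) auto

lemma ba_add: assumes x: "x \<in> blockalg ns" and y: "y \<in> blockalg ns" shows "x + y \<in> blockalg ns"
proof (rule ba_I)
  have cx: "x \<in> carrier_mat (tdim ns) (tdim ns)" and cy: "y \<in> carrier_mat (tdim ns) (tdim ns)"
    using x y by (auto intro: ba_carrier)
  then show "x + y \<in> carrier_mat (tdim ns) (tdim ns)" by simp
  fix i j assume i: "i < tdim ns" and j: "j < tdim ns" and n: "\<not> same_block ns i j"
  have "(x + y) $$ (i,j) = x $$ (i,j) + y $$ (i,j)" using cx cy i j by simp
  then show "(x + y) $$ (i,j) = 0" using ba_zero_entry[OF x i j n] ba_zero_entry[OF y i j n] by simp
qed

lemma ba_smult: assumes x: "x \<in> blockalg ns" shows "c \<cdot>\<^sub>m x \<in> blockalg ns"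
proof (rule ba_I)
  have cx: "x \<in> carrier_mat (tdim ns) (tdim ns)" using x by (auto intro: ba_carrier)
  then show "c \<cdot>\<^sub>m x \<in> carrier_mat (tdim ns) (tdim ns)" by simp
  fix i j assume i: "i < tdim ns" and j: "j < tdim ns" and n: "\<not> same_block ns i j"
  have "(c \<cdot>\<^sub>m x) $$ (i,j) = c * x $$ (i,j)" using cx i j by simp
  then show "(c \<cdot>\<^sub>m x) $$ (i,j) = 0" using ba_zero_entry[OF x i j n] by simp
qed

lemma ba_msum: "(\<forall>g\<in>set gs. f g \<in> blockalg ns) \<Longrightarrow> msum (tdim ns) f gs \<in> blockalg ns"
proof (induction gs)
  case Nil then show ?case by (simp add: msum_def ba_zero)
next
  case (Cons g gs)
  have "msum (tdim ns) f (g # gs) = f g + msum (tdim ns) f gs" by (simp add: msum_def)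
  then show ?case using Cons ba_add by simp
qed

lemma ba_adj: assumes x: "x \<in> blockalg ns" shows "adj x \<in> blockalg ns"
proof (rule ba_I)
  have cx: "x \<in> carrier_mat (tdim ns) (tdim ns)" using x by (auto intro: ba_carrier)
  then show "adj x \<in> carrier_mat (tdim ns) (tdim ns)" by (rule adj_carrier)
  fix i j assume i: "i < tdim ns" and j: "j < tdim ns" and n: "\<not> same_block ns i j"
  have n': "\<not> same_block ns j i" using n sb_sym by blast
  have "adj x $$ (i,j) = cnj (x $$ (j,i))" using cx i j by (simp add: adj_index)
  then show "adj x $$ (i,j) = 0" using ba_zero_entry[OF x j i n'] by simp
qed

lemma ba_mult: assumes "x \<in> blockalg ns" "y \<in> blockalg ns" shows "x * y \<in> blockalg ns"
proof (rule ba_I)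
  show "x * y \<in> carrier_mat (tdim ns) (tdim ns)" using assms by (auto dest!: ba_carrier)
next
  fix i j assume i: "i < tdim ns" and j: "j < tdim ns" and n: "\<not> same_block ns i j"
  have "(x * y) $$ (i,j) = (\<Sum>p<tdim ns. x $$ (i,p) * y $$ (p,j))"
    using assms i j by (intro mult_index) (auto dest: ba_carrier)
  also have "\<dots> = 0"
  proof (rule sum.neutral, intro ballI)
    fix p assume p: "p \<in> {..<tdim ns}"
    show "x $$ (i,p) * y $$ (p,j) = 0"
    proof (cases "same_block ns i p")
      case True
      then have "\<not> same_block ns p j" using n sb_trans by blast
      then show ?thesis using ba_zero_entry[OF assms(2)] p j by simp
    next
      case False then show ?thesis using ba_zero_entry[OF assms(1)] p i by simp
    qed
  qed
  finally show "(x * y) $$ (i,j) = 0" .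
qed

lemma munit_ba: "same_block ns i j \<Longrightarrow> munit (tdim ns) i j \<in> blockalg ns"
  by (rule ba_I) (auto simp: munit_def)

lemma msum_cong: "(\<forall>g\<in>set gs. f g = h g) \<Longrightarrow> msum m f gs = msum m h gs"
  unfolding msum_def by (induction gs) auto

locale phi_ctx =
  fixes ns ms :: "nat list" and \<Phi> :: "complex mat \<Rightarrow> complex mat"
  assumes lin: "linear_on (blockalg ns) \<Phi>"
    and img: "\<Phi> ` blockalg ns \<subseteq> blockalg ms"
begin

lemma Phi_ba: "x \<in> blockalg ns \<Longrightarrow> \<Phi> x \<in> blockalg ms"
  using img by blast

lemma Phi_carrier: "x \<in> blockalg ns \<Longrightarrow> \<Phi> x \<in> carrier_mat (tdim ms) (tdim ms)"
  using Phi_ba ba_carrier by blast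

lemma Phi_add: "x \<in> blockalg ns \<Longrightarrow> y \<in> blockalg ns \<Longrightarrow> \<Phi> (x + y) = \<Phi> x + \<Phi> y"
  using lin unfolding linear_on_def by blast

lemma Phi_smult: "x \<in> blockalg ns \<Longrightarrow> \<Phi> (c \<cdot>\<^sub>m x) = c \<cdot>\<^sub>m \<Phi> x"
  using lin unfolding linear_on_def by blast

lemma Phi_zero: "\<Phi> (0\<^sub>m (tdim ns) (tdim ns)) = 0\<^sub>m (tdim ms) (tdim ms)"
proof -
  have z: "(0::complex) \<cdot>\<^sub>m 0\<^sub>m (tdim ns) (tdim ns) = 0\<^sub>m (tdim ns) (tdim ns)" by (rule eq_matI) auto
  have c: "\<Phi> (0\<^sub>m (tdim ns) (tdim ns)) \<in> carrier_mat (tdim ms) (tdim ms)" by (rule Phi_carrier[OF ba_zero])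
  have "\<Phi> (0\<^sub>m (tdim ns) (tdim ns)) = 0 \<cdot>\<^sub>m \<Phi> (0\<^sub>m (tdim ns) (tdim ns))"
    using Phi_smult[OF ba_zero, of 0] z by simp
  also have "\<dots> = 0\<^sub>m (tdim ms) (tdim ms)" using c by (intro eq_matI) auto
  finally show ?thesis .
qed

lemma Phi_msum: "(\<forall>g\<in>set gs. f g \<in> blockalg ns) \<Longrightarrow> \<Phi> (msum (tdim ns) f gs) = msum (tdim ms) (\<lambda>g. \<Phi> (f g)) gs"
proof (induction gs)
  case Nil then show ?case by (simp add: msum_def Phi_zero)
next
  case (Cons g gs)
  have "\<Phi> (msum (tdim ns) f (g # gs)) = \<Phi> (f g + msum (tdim ns) f gs)" by (simp add: msum_def)
  also have "\<dots> = \<Phi> (f g) + \<Phi> (msum (tdim ns) f gs)"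
    using Cons.prems by (intro Phi_add) (auto intro: ba_msum)
  also have "\<dots> = msum (tdim ms) (\<lambda>g. \<Phi> (f g)) (g # gs)" using Cons by (simp add: msum_def)
  finally show ?case .
qed

lemma expand_mat:
  assumes y: "y \<in> blockalg ns"
  shows "y = msum (tdim ns) (\<lambda>r. msum (tdim ns) (\<lambda>s. y $$ (r,s) \<cdot>\<^sub>m munit (tdim ns) r s) (filter (same_block ns r) [0..<tdim ns])) [0..<tdim ns]"
    (is "y = ?S")
proof (rule eq_matI)
  let ?N = "tdim ns"
  have cy: "y \<in> carrier_mat ?N ?N" using y by (rule ba_carrier)
  have ci: "\<And>r. msum ?N (\<lambda>s. y $$ (r,s) \<cdot>\<^sub>m munit ?N r s) (filter (same_block ns r) [0..<?N]) \<in> carrier_mat ?N ?N"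
    by (rule msum_carrier) (auto simp: munit_def)
  have cS: "?S \<in> carrier_mat ?N ?N" using ci by (intro msum_carrier) auto
  then show "dim_row y = dim_row ?S" "dim_col y = dim_col ?S" using cy by auto
  fix a b assume a: "a < dim_row ?S" and b: "b < dim_col ?S"
  then have a': "a < ?N" and b': "b < ?N" using cS by auto
  have "?S $$ (a,b) = (\<Sum>r<?N. \<Sum>s<?N. if same_block ns r s then y $$ (r,s) * (if a = r \<and> b = s then 1 else 0) else 0)"
    using a' b' ci by (simp add: msum_index sum_list_upt sum_list_upt_filter munit_def)
  also have "\<dots> = (\<Sum>r<?N. \<Sum>s<?N. if r = a then (if s = b then (if same_block ns a b then y $$ (a,b) else 0) else 0) else 0)"
    by (intro sum.cong refl) auto
  also have "\<dots> = (\<Sum>r<?N. if r = a then (\<Sum>s<?N. if s = b then (if same_block ns a b then y $$ (a,b) else 0) else 0) else 0)"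
    by (intro sum.cong refl) auto
  also have "\<dots> = (if same_block ns a b then y $$ (a,b) else 0)" using a' b' by simp
  also have "\<dots> = y $$ (a,b)" using ba_zero_entry[OF y a' b'] by auto
  finally show "y $$ (a,b) = ?S $$ (a,b)" by simp
qed

lemma Phi_expand:
  assumes y: "y \<in> blockalg ns" and p: "p < tdim ms" and q: "q < tdim ms"
  shows "\<Phi> y $$ (p,q) = (\<Sum>r<tdim ns. \<Sum>s<tdim ns. y $$ (r,s) * \<Phi> (munit (tdim ns) r s) $$ (p,q))"
proof -
  let ?N = "tdim ns" and ?M = "tdim ms"
  have inner: "\<And>r. \<forall>s\<in>set (filter (same_block ns r) [0..<?N]). y $$ (r,s) \<cdot>\<^sub>m munit ?N r s \<in> blockalg ns"
    by (auto intro!: ba_smult munit_ba)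
  have "\<Phi> y = \<Phi> (msum ?N (\<lambda>r. msum ?N (\<lambda>s. y $$ (r,s) \<cdot>\<^sub>m munit ?N r s) (filter (same_block ns r) [0..<?N])) [0..<?N])"
    using expand_mat[OF y] by simp
  also have "\<dots> = msum ?M (\<lambda>r. msum ?M (\<lambda>s. y $$ (r,s) \<cdot>\<^sub>m \<Phi> (munit ?N r s)) (filter (same_block ns r) [0..<?N])) [0..<?N]"
  proof -
    have "\<Phi> (msum ?N (\<lambda>r. msum ?N (\<lambda>s. y $$ (r,s) \<cdot>\<^sub>m munit ?N r s) (filter (same_block ns r) [0..<?N])) [0..<?N])
       = msum ?M (\<lambda>r. \<Phi> (msum ?N (\<lambda>s. y $$ (r,s) \<cdot>\<^sub>m munit ?N r s) (filter (same_block ns r) [0..<?N]))) [0..<?N]"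
      using inner by (intro Phi_msum) (auto intro: ba_msum)
    also have "\<dots> = msum ?M (\<lambda>r. msum ?M (\<lambda>s. \<Phi> (y $$ (r,s) \<cdot>\<^sub>m munit ?N r s)) (filter (same_block ns r) [0..<?N])) [0..<?N]"
      using inner by (simp add: Phi_msum)
    also have "\<dots> = msum ?M (\<lambda>r. msum ?M (\<lambda>s. y $$ (r,s) \<cdot>\<^sub>m \<Phi> (munit ?N r s)) (filter (same_block ns r) [0..<?N])) [0..<?N]"
    proof -
      have "\<And>r s. s \<in> set (filter (same_block ns r) [0..<?N]) \<Longrightarrow> \<Phi> (y $$ (r,s) \<cdot>\<^sub>m munit ?N r s) = y $$ (r,s) \<cdot>\<^sub>m \<Phi> (munit ?N r s)"
        by (auto intro!: Phi_smult munit_ba)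
      then show ?thesis by (intro msum_cong ballI) auto
    qed
    finally show ?thesis .
  qed
  finally have e: "\<Phi> y = msum ?M (\<lambda>r. msum ?M (\<lambda>s. y $$ (r,s) \<cdot>\<^sub>m \<Phi> (munit ?N r s)) (filter (same_block ns r) [0..<?N])) [0..<?N]" .
  have ci: "\<And>r. \<forall>s\<in>set (filter (same_block ns r) [0..<?N]). y $$ (r,s) \<cdot>\<^sub>m \<Phi> (munit ?N r s) \<in> carrier_mat ?M ?M"
    using Phi_carrier munit_ba by (auto simp del: smult_carrier_mat intro!: smult_carrier_mat)
  have ci2: "\<forall>r\<in>set [0..<?N]. msum ?M (\<lambda>s. y $$ (r,s) \<cdot>\<^sub>m \<Phi> (munit ?N r s)) (filter (same_block ns r) [0..<?N]) \<in> carrier_mat ?M ?M"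
    using ci by (auto intro: msum_carrier)
  have "\<Phi> y $$ (p,q) = (\<Sum>r<?N. \<Sum>s<?N. if same_block ns r s then y $$ (r,s) * \<Phi> (munit ?N r s) $$ (p,q) else 0)"
    unfolding e using p q ci ci2 apply (simp add: msum_index sum_list_upt sum_list_upt_filter)
    apply (intro sum.cong refl)
    by (metis (no_types, lifting) Phi_carrier carrier_matD(1) carrier_matD(2) index_smult_mat(1) munit_ba)
  also have "\<dots> = (\<Sum>r<?N. \<Sum>s<?N. y $$ (r,s) * \<Phi> (munit ?N r s) $$ (p,q))"
    using ba_zero_entry[OF y] by (intro sum.cong refl) auto
  finally show ?thesis .
qed

end

definition lv :: "nat \<Rightarrow> (nat \<Rightarrow> complex) \<Rightarrow> complex mat \<Rightarrow> nat \<Rightarrow> complex" where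
  "lv m u X q = (\<Sum>r<m. cnj (u r) * X $$ (r,q))"

definition bf :: "nat \<Rightarrow> (nat \<Rightarrow> complex) \<Rightarrow> complex mat \<Rightarrow> (nat \<Rightarrow> complex) \<Rightarrow> complex" where
  "bf m u Y w = (\<Sum>p<m. \<Sum>q<m. cnj (u p) * Y $$ (p,q) * w q)"

lemma swap22:
  "(\<Sum>a\<in>A. \<Sum>b\<in>B. \<Sum>c\<in>C. \<Sum>d\<in>D. f a b c d) = (\<Sum>c\<in>C. \<Sum>d\<in>D. \<Sum>a\<in>A. \<Sum>b\<in>B. f a b c d)"
proof -
  have "(\<Sum>a\<in>A. \<Sum>b\<in>B. \<Sum>c\<in>C. \<Sum>d\<in>D. f a b c d) = (\<Sum>a\<in>A. \<Sum>c\<in>C. \<Sum>b\<in>B. \<Sum>d\<in>D. f a b c d)"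
    by (rule sum.cong[OF refl], rule sum.swap)
  also have "\<dots> = (\<Sum>c\<in>C. \<Sum>a\<in>A. \<Sum>b\<in>B. \<Sum>d\<in>D. f a b c d)" by (rule sum.swap)
  also have "\<dots> = (\<Sum>c\<in>C. \<Sum>a\<in>A. \<Sum>d\<in>D. \<Sum>b\<in>B. f a b c d)"
    by (rule sum.cong[OF refl], rule sum.cong[OF refl], rule sum.swap)
  also have "\<dots> = (\<Sum>c\<in>C. \<Sum>d\<in>D. \<Sum>a\<in>A. \<Sum>b\<in>B. f a b c d)"
    by (rule sum.cong[OF refl], rule sum.swap)
  finally show ?thesis .
qed

lemma sum_split_kn: fixes g :: "nat \<Rightarrow> 'a::comm_monoid_add" shows "(\<Sum>r<k*n. g r) = (\<Sum>i<k. \<Sum>p<n. g (i*n+p))"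
proof -
  have "(\<Sum>r<k*n. g r) = (\<Sum>i<k. \<Sum>r\<in>{i*n..<i*n+n}. g r)"
    using sum.nat_group[of g n k] by (simp add: mult.commute)
  also have "\<dots> = (\<Sum>i<k. \<Sum>p<n. g (i*n+p))"
  proof (rule sum.cong[OF refl])
    fix i
    show "(\<Sum>r\<in>{i*n..<i*n+n}. g r) = (\<Sum>p<n. g (i*n+p))"
      using sum.atLeastLessThan_shift_bounds[of g 0 "i*n" n] by (simp add: atLeast0LessThan comp_def add.commute)
  qed
  finally show ?thesis .
qed

lemma cnj_mult_nonneg: "0 \<le> cnj z * (z::complex)"
  by (simp add: less_eq_complex_def)

lemma mult_cnj_nonneg: "0 \<le> z * cnj (z::complex)"
  by (simp add: less_eq_complex_def)

lemma qf_sum: "qf n (\<lambda>r c. \<Sum>g\<in>S. F g r c) u = (\<Sum>g\<in>S. qf n (F g) u)"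
proof -
  have "qf n (\<lambda>r c. \<Sum>g\<in>S. F g r c) u = (\<Sum>r<n. \<Sum>c<n. \<Sum>g\<in>S. cnj (u r) * F g r c * u c)"
    unfolding qf_def by (simp add: sum_distrib_left sum_distrib_right)
  also have "\<dots> = (\<Sum>r<n. \<Sum>g\<in>S. \<Sum>c<n. cnj (u r) * F g r c * u c)"
    by (rule sum.cong[OF refl], rule sum.swap)
  also have "\<dots> = (\<Sum>g\<in>S. \<Sum>r<n. \<Sum>c<n. cnj (u r) * F g r c * u c)"
    by (rule sum.swap)
  finally show ?thesis unfolding qf_def .
qed

lemma qf_mult_adj:
  assumes X: "X \<in> carrier_mat m k" and Y: "Y \<in> carrier_mat m k"
  shows "qf m (\<lambda>r c. (X * adj Y) $$ (r,c)) u = (\<Sum>q<k. lv m u X q * cnj (lv m u Y q))"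
proof -
  have aY: "adj Y \<in> carrier_mat k m" using Y by (rule adj_carrier)
  have e: "\<And>r c. r < m \<Longrightarrow> c < m \<Longrightarrow> (X * adj Y) $$ (r,c) = (\<Sum>q<k. X $$ (r,q) * cnj (Y $$ (c,q)))"
    using X Y by (subst mult_index[OF X aY]) (auto simp: adj_index intro!: sum.cong)
  have "qf m (\<lambda>r c. (X * adj Y) $$ (r,c)) u = (\<Sum>r<m. \<Sum>c<m. cnj (u r) * (\<Sum>q<k. X $$ (r,q) * cnj (Y $$ (c,q))) * u c)"
    unfolding qf_def using e by (intro sum.cong refl) simp
  also have "\<dots> = (\<Sum>r<m. \<Sum>c<m. \<Sum>q<k. (cnj (u r) * X $$ (r,q)) * (cnj (Y $$ (c,q)) * u c))"
    by (simp add: sum_distrib_left sum_distrib_right mult_ac)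
  also have "\<dots> = (\<Sum>q<k. \<Sum>r<m. \<Sum>c<m. (cnj (u r) * X $$ (r,q)) * (cnj (Y $$ (c,q)) * u c))"
  proof -
    have "(\<Sum>r<m. \<Sum>c<m. \<Sum>q<k. (cnj (u r) * X $$ (r,q)) * (cnj (Y $$ (c,q)) * u c))
        = (\<Sum>r<m. \<Sum>q<k. \<Sum>c<m. (cnj (u r) * X $$ (r,q)) * (cnj (Y $$ (c,q)) * u c))"
      by (rule sum.cong[OF refl], rule sum.swap)
    also have "\<dots> = (\<Sum>q<k. \<Sum>r<m. \<Sum>c<m. (cnj (u r) * X $$ (r,q)) * (cnj (Y $$ (c,q)) * u c))"
      by (rule sum.swap)
    finally show ?thesis .
  qed
  also have "\<dots> = (\<Sum>q<k. lv m u X q * cnj (lv m u Y q))"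
    unfolding lv_def by (simp add: sum_distrib_left sum_distrib_right mult_ac)
  finally show ?thesis .
qed

lemma lv_mult:
  assumes X: "X \<in> carrier_mat m k" and Y: "Y \<in> carrier_mat k l" and q: "q < l"
  shows "lv m u (X * Y) q = (\<Sum>p<k. lv m u X p * Y $$ (p,q))"
proof -
  have "lv m u (X * Y) q = (\<Sum>r<m. \<Sum>p<k. cnj (u r) * X $$ (r,p) * Y $$ (p,q))"
    unfolding lv_def using X Y q by (intro sum.cong refl) (simp add: mult_index[OF X Y] sum_distrib_left mult_ac del: index_mult_mat)
  also have "\<dots> = (\<Sum>p<k. \<Sum>r<m. cnj (u r) * X $$ (r,p) * Y $$ (p,q))" by (rule sum.swap)
  also have "\<dots> = (\<Sum>p<k. lv m u X p * Y $$ (p,q))"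
    unfolding lv_def by (simp add: sum_distrib_right)
  finally show ?thesis .
qed

lemma lv_msum:
  assumes "\<forall>g\<in>set gs. f g \<in> carrier_mat m m" and q: "q < m"
  shows "lv m u (msum m f gs) q = (\<Sum>g\<leftarrow>gs. lv m u (f g) q)"
proof -
  have "lv m u (msum m f gs) q = (\<Sum>r<m. cnj (u r) * (\<Sum>g\<leftarrow>gs. f g $$ (r,q)))"
    unfolding lv_def using assms by (intro sum.cong refl) (simp add: msum_index)
  also have "\<dots> = (\<Sum>g\<leftarrow>gs. lv m u (f g) q)"
    unfolding lv_def by (induction gs) (simp_all add: algebra_simps sum.distrib)
  finally show ?thesis .
qed

lemma qf_adj_mult_nonneg:
  assumes "dim_col C = n"
  shows "0 \<le> qf n (\<lambda>r c. (adj C * C) $$ (r,c)) v"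
proof -
  let ?k = "dim_row C"
  have C: "C \<in> carrier_mat ?k n" using assms by auto
  have aC: "adj C \<in> carrier_mat n ?k" using C by (rule adj_carrier)
  have e: "(adj C * C) $$ (r,c) = (\<Sum>p<?k. cnj (C $$ (p,r)) * C $$ (p,c))" if rc: "r < n" "c < n" for r c
  proof -
    have "(adj C * C) $$ (r,c) = (\<Sum>p<?k. adj C $$ (r,p) * C $$ (p,c))" by (rule mult_index[OF aC C rc])
    also have "\<dots> = (\<Sum>p<?k. cnj (C $$ (p,r)) * C $$ (p,c))"
      by (rule sum.cong[OF refl]) (use rc assms in \<open>simp add: adj_index\<close>)
    finally show ?thesis .
  qed
  have "qf n (\<lambda>r c. (adj C * C) $$ (r,c)) v = (\<Sum>r<n. \<Sum>c<n. \<Sum>p<?k. (cnj (v r) * cnj (C $$ (p,r))) * (C $$ (p,c) * v c))"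
    unfolding qf_def using e by (intro sum.cong refl) (simp add: sum_distrib_left sum_distrib_right mult_ac)
  also have "\<dots> = (\<Sum>p<?k. \<Sum>r<n. \<Sum>c<n. (cnj (v r) * cnj (C $$ (p,r))) * (C $$ (p,c) * v c))"
  proof -
    have "(\<Sum>r<n. \<Sum>c<n. \<Sum>p<?k. (cnj (v r) * cnj (C $$ (p,r))) * (C $$ (p,c) * v c))
       = (\<Sum>r<n. \<Sum>p<?k. \<Sum>c<n. (cnj (v r) * cnj (C $$ (p,r))) * (C $$ (p,c) * v c))"
      by (rule sum.cong[OF refl], rule sum.swap)
    also have "\<dots> = (\<Sum>p<?k. \<Sum>r<n. \<Sum>c<n. (cnj (v r) * cnj (C $$ (p,r))) * (C $$ (p,c) * v c))"
      by (rule sum.swap)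
    finally show ?thesis .
  qed
  also have "\<dots> = (\<Sum>p<?k. cnj (\<Sum>r<n. C $$ (p,r) * v r) * (\<Sum>c<n. C $$ (p,c) * v c))"
    by (simp add: sum_distrib_left sum_distrib_right mult_ac)
  also have "0 \<le> \<dots>" by (intro sum_nonneg) (rule cnj_mult_nonneg)
  finally show ?thesis .
qed

lemma qf_op_nonneg:
  assumes a: "a \<in> carrier_mat m m"
  shows "0 \<le> qf m (\<lambda>r c. (a * adj a) $$ (r,c)) u"
  unfolding qf_mult_adj[OF a a] by (intro sum_nonneg) (rule mult_cnj_nonneg)

lemma idx_lt: "i < k \<Longrightarrow> p < (n::nat) \<Longrightarrow> i*n+p < k*n"
proof -
  assume a: "i < k" "p < n"
  have "i*n+p < i*n+n" using a by simp
  also have "\<dots> = Suc i * n" by simp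
  also have "\<dots> \<le> k*n" using a by (intro mult_le_mono1) simp
  finally show ?thesis .
qed

lemma idx_div: "p < (n::nat) \<Longrightarrow> (i*n+p) div n = i" by simp
lemma idx_mod: "p < (n::nat) \<Longrightarrow> (i*n+p) mod n = p" by simp

lemma qf_blockmat:
  "qf (k*n) (\<lambda>r c. blockmat k n X $$ (r,c)) V =
     (\<Sum>i<k. \<Sum>j<k. bf n (\<lambda>p. V (i*n+p)) (X i j) (\<lambda>q. V (j*n+q)))"
proof -
  have e: "\<And>i j p q. i < k \<Longrightarrow> j < k \<Longrightarrow> p < n \<Longrightarrow> q < n \<Longrightarrow>
     blockmat k n X $$ (i*n+p, j*n+q) = X i j $$ (p,q)"
  proof -
    fix i j p q assume "i < k" "j < k" "p < n" "q < n"
    moreover have "i*n+p < k*n" using idx_lt \<open>i < k\<close> \<open>p < n\<close> by blast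
    moreover have "j*n+q < k*n" using idx_lt \<open>j < k\<close> \<open>q < n\<close> by blast
    ultimately show "blockmat k n X $$ (i*n+p, j*n+q) = X i j $$ (p,q)"
      unfolding blockmat_def by (simp add: idx_div idx_mod)
  qed
  have "qf (k*n) (\<lambda>r c. blockmat k n X $$ (r,c)) V =
     (\<Sum>i<k. \<Sum>p<n. \<Sum>j<k. \<Sum>q<n. cnj (V (i*n+p)) * blockmat k n X $$ (i*n+p, j*n+q) * V (j*n+q))"
    unfolding qf_def sum_split_kn ..
  also have "\<dots> = (\<Sum>i<k. \<Sum>p<n. \<Sum>j<k. \<Sum>q<n. cnj (V (i*n+p)) * X i j $$ (p,q) * V (j*n+q))"
    using e by (intro sum.cong refl) simp
  also have "\<dots> = (\<Sum>i<k. \<Sum>j<k. \<Sum>p<n. \<Sum>q<n. cnj (V (i*n+p)) * X i j $$ (p,q) * V (j*n+q))"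
    by (rule sum.cong[OF refl], rule sum.swap)
  finally show ?thesis unfolding bf_def .
qed

lemma qf_cong: "(\<And>r c. r < n \<Longrightarrow> c < n \<Longrightarrow> A r c = B r c) \<Longrightarrow> qf n A u = qf n B u"
  unfolding qf_def by (intro sum.cong refl) simp

lemma if_sum: "(if P then sum f A else 0) = (\<Sum>x\<in>A. if P then f x else 0)"
  by simp

context phi_ctx
begin

definition chq :: "(nat \<Rightarrow> nat \<Rightarrow> complex) \<Rightarrow> complex" where
  "chq y = (\<Sum>r<tdim ns. \<Sum>s<tdim ns. if same_block ns r s then bf (tdim ms) (y r) (\<Phi> (munit (tdim ns) r s)) (y s) else 0)"

lemma QFG:
  assumes xi: "\<xi> \<in> Mmod ns ms"
  shows "qf (tdim ms) (\<lambda>r c. mod_inner ns ms \<xi> (C_op ns ms \<Phi> \<xi>) $$ (r,c)) u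
     = chq (\<lambda>j p. cnj (lv (tdim ms) u (\<xi> j) p))"
proof -
  let ?N = "tdim ns" and ?M = "tdim ms"
  define \<eta> where "\<eta> = C_op ns ms \<Phi> \<xi>"
  define z where "z = (\<lambda>j p. lv ?M u (\<xi> j) p)"
  define E where "E = (\<lambda>j g. \<Phi> (munit ?N j g))"
  have c\<xi>: "\<And>j. j < ?N \<Longrightarrow> \<xi> j \<in> carrier_mat ?M ?M" using xi unfolding Mmod_def by (auto intro: ba_carrier)
  have cE: "\<And>g j. same_block ns g j \<Longrightarrow> E j g \<in> carrier_mat ?M ?M"
    unfolding E_def by (intro Phi_carrier munit_ba) (rule sb_sym)
  have \<eta>g: "\<And>g. g < ?N \<Longrightarrow> \<eta> g = msum ?M (\<lambda>j. \<xi> j * E j g) (filter (same_block ns g) [0..<?N])"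
    unfolding \<eta>_def C_op_def op_mult_def E_def by simp
  have cprod: "\<And>g. \<forall>j\<in>set (filter (same_block ns g) [0..<?N]). \<xi> j * E j g \<in> carrier_mat ?M ?M"
    using c\<xi> cE by (auto intro!: mult_carrier_mat)
  have c\<eta>: "\<And>g. g < ?N \<Longrightarrow> \<eta> g \<in> carrier_mat ?M ?M"
    using \<eta>g cprod by (simp add: msum_carrier)
  have cG: "\<forall>g\<in>set [0..<?N]. \<eta> g * adj (\<xi> g) \<in> carrier_mat ?M ?M"
    using c\<eta> c\<xi> by (auto intro!: mult_carrier_mat adj_carrier)
  have "qf ?M (\<lambda>r c. mod_inner ns ms \<xi> \<eta> $$ (r,c)) u = qf ?M (\<lambda>r c. \<Sum>g<?N. (\<eta> g * adj (\<xi> g)) $$ (r,c)) u"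
    unfolding mod_inner_def op_mult_def using cG by (intro qf_cong) (simp add: msum_index sum_list_upt)
  also have "\<dots> = (\<Sum>g<?N. qf ?M (\<lambda>r c. (\<eta> g * adj (\<xi> g)) $$ (r,c)) u)" by (rule qf_sum)
  also have "\<dots> = (\<Sum>g<?N. \<Sum>q<?M. lv ?M u (\<eta> g) q * cnj (z g q))"
    unfolding z_def using c\<eta> c\<xi> by (intro sum.cong refl qf_mult_adj) auto
  also have "\<dots> = (\<Sum>g<?N. \<Sum>q<?M. (\<Sum>j<?N. if same_block ns g j then \<Sum>p<?M. z j p * E j g $$ (p,q) else 0) * cnj (z g q))"
  proof (rule sum.cong[OF refl], rule sum.cong[OF refl])
    fix g q assume g: "g \<in> {..<?N}" and q: "q \<in> {..<?M}"
    have "lv ?M u (\<eta> g) q = (\<Sum>j\<leftarrow>filter (same_block ns g) [0..<?N]. lv ?M u (\<xi> j * E j g) q)"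
      using g q \<eta>g cprod by (simp add: lv_msum)
    also have "\<dots> = (\<Sum>j<?N. if same_block ns g j then lv ?M u (\<xi> j * E j g) q else 0)"
      by (rule sum_list_upt_filter)
    also have "\<dots> = (\<Sum>j<?N. if same_block ns g j then \<Sum>p<?M. z j p * E j g $$ (p,q) else 0)"
      unfolding z_def using q by (intro sum.cong refl) (simp add: lv_mult[OF c\<xi> cE])
    finally show "lv ?M u (\<eta> g) q * cnj (z g q) = (\<Sum>j<?N. if same_block ns g j then \<Sum>p<?M. z j p * E j g $$ (p,q) else 0) * cnj (z g q)"
      by simp
  qed
  also have "\<dots> = (\<Sum>g<?N. \<Sum>q<?M. \<Sum>j<?N. \<Sum>p<?M. if same_block ns j g then z j p * E j g $$ (p,q) * cnj (z g q) else 0)"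
  proof (rule sum.cong[OF refl], rule sum.cong[OF refl])
    fix g q
    show "(\<Sum>j<?N. if same_block ns g j then \<Sum>p<?M. z j p * E j g $$ (p,q) else 0) * cnj (z g q) =
      (\<Sum>j<?N. \<Sum>p<?M. if same_block ns j g then z j p * E j g $$ (p,q) * cnj (z g q) else 0)"
      unfolding sum_distrib_right
    proof (rule sum.cong[OF refl])
      fix j
      show "(if same_block ns g j then \<Sum>p<?M. z j p * E j g $$ (p,q) else 0) * cnj (z g q) =
        (\<Sum>p<?M. if same_block ns j g then z j p * E j g $$ (p,q) * cnj (z g q) else 0)"
      proof (cases "same_block ns g j")
        case True
        then have "same_block ns j g" by (rule sb_sym)
        then show ?thesis using True by (simp add: sum_distrib_right)
      next
        case False
        then have "\<not> same_block ns j g" using sb_sym by blast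
        then show ?thesis using False by simp
      qed
    qed
  qed
  also have "\<dots> = (\<Sum>j<?N. \<Sum>p<?M. \<Sum>g<?N. \<Sum>q<?M. if same_block ns j g then z j p * E j g $$ (p,q) * cnj (z g q) else 0)"
    by (rule swap22)
  also have "\<dots> = (\<Sum>j<?N. \<Sum>g<?N. \<Sum>p<?M. \<Sum>q<?M. if same_block ns j g then z j p * E j g $$ (p,q) * cnj (z g q) else 0)"
    by (rule sum.cong[OF refl], rule sum.swap)
  also have "\<dots> = chq (\<lambda>j p. cnj (z j p))"
    unfolding chq_def bf_def E_def complex_cnj_cnj by (intro sum.cong refl) (simp add: if_sum)
  finally show ?thesis unfolding \<eta>_def z_def .
qed

end

lemma chol_mat:
  assumes G: "G \<in> carrier_mat m m" and sym: "\<forall>r c. R r c \<longrightarrow> R c r" and trans: "\<forall>r c d. R r c \<longrightarrow> R c d \<longrightarrow> R r d"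
    and pat: "\<forall>r<m. \<forall>c<m. G $$ (r,c) \<noteq> 0 \<longrightarrow> R r c"
    and psd: "\<forall>v. 0 \<le> qf m (\<lambda>r c. G $$ (r,c)) v"
  shows "\<exists>L\<in>carrier_mat m m. G = adj L * L \<and> (\<forall>r<m. \<forall>c<m. L $$ (r,c) \<noteq> 0 \<longrightarrow> R r c)"
proof -
  obtain Lf where Lf: "\<forall>r<m. \<forall>c<m. G $$ (r,c) = (\<Sum>p<m. cnj (Lf p r) * Lf p c)"
    "\<forall>r<m. \<forall>c<m. Lf r c \<noteq> 0 \<longrightarrow> R r c"
    using chol[of R m "\<lambda>r c. G $$ (r,c)", OF sym trans pat psd] by blast
  define L where "L = mat m m (\<lambda>(r,c). Lf r c)"
  have cL: "L \<in> carrier_mat m m" unfolding L_def by simp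
  have aL: "adj L \<in> carrier_mat m m" using cL by (rule adj_carrier)
  have "G = adj L * L"
  proof (rule eq_matI)
    fix r c assume r: "r < dim_row (adj L * L)" and c: "c < dim_col (adj L * L)"
    then have r': "r < m" and c': "c < m" using aL cL by auto
    have "(adj L * L) $$ (r,c) = (\<Sum>p<m. adj L $$ (r,p) * L $$ (p,c))" by (rule mult_index[OF aL cL r' c'])
    also have "\<dots> = (\<Sum>p<m. cnj (Lf p r) * Lf p c)"
      by (rule sum.cong[OF refl]) (use r' c' cL in \<open>simp add: adj_index L_def\<close>)
    finally show "G $$ (r,c) = (adj L * L) $$ (r,c)" using Lf(1) r' c' by simp
  qed (use G aL cL in auto)
  moreover have "\<forall>r<m. \<forall>c<m. L $$ (r,c) \<noteq> 0 \<longrightarrow> R r c" using Lf(2) unfolding L_def by simp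
  ultimately show ?thesis using cL by blast
qed

context phi_ctx
begin

lemma chq_cong: "(\<And>r p. r < tdim ns \<Longrightarrow> p < tdim ms \<Longrightarrow> y r p = y' r p) \<Longrightarrow> chq y = chq y'"
  unfolding chq_def bf_def by (intro sum.cong refl) auto

lemma mod_pos_chq:
  assumes H: "\<forall>\<xi>\<in>Mmod ns ms. cstar_pos (blockalg ms) op_mult (mod_inner ns ms \<xi> (C_op ns ms \<Phi> \<xi>))"
  shows "0 \<le> chq y"
proof -
  let ?N = "tdim ns" and ?M = "tdim ms"
  define \<xi> where "\<xi> = (\<lambda>g. if g < ?N then mat ?M ?M (\<lambda>(a,b). if a = b then cnj (y g a) else 0) else 0\<^sub>m 0 0)"
  have "\<xi> \<in> Mmod ns ms"
    unfolding Mmod_def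
  proof (intro CollectI conjI allI impI)
    fix g assume g: "g < ?N"
    show "\<xi> g \<in> blockalg ms" unfolding \<xi>_def using g
      by (auto intro!: ba_I simp: sb_refl)
  next
    fix g assume "tdim ns \<le> g" then show "\<xi> g = 0\<^sub>m 0 0" unfolding \<xi>_def by simp
  qed
  then obtain a where a: "a \<in> blockalg ms" "mod_inner ns ms \<xi> (C_op ns ms \<Phi> \<xi>) = a * adj a"
    using H unfolding cstar_pos_def op_mult_def by blast
  have "0 \<le> qf ?M (\<lambda>r c. (a * adj a) $$ (r,c)) (\<lambda>_. 1)"
    using a(1) by (intro qf_op_nonneg ba_carrier)
  also have "\<dots> = chq (\<lambda>j p. cnj (lv ?M (\<lambda>_. 1) (\<xi> j) p))"
    using QFG[OF \<open>\<xi> \<in> Mmod ns ms\<close>, of "\<lambda>_. 1"] a(2) by simp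
  also have "\<dots> = chq y"
  proof (rule chq_cong)
    fix r p assume r: "r < ?N" and p: "p < ?M"
    have "lv ?M (\<lambda>_. 1) (\<xi> r) p = (\<Sum>a<?M. if a = p then cnj (y r p) else 0)"
      unfolding lv_def \<xi>_def using r p by (intro sum.cong refl) auto
    also have "\<dots> = cnj (y r p)" using p by simp
    finally show "cnj (lv ?M (\<lambda>_. 1) (\<xi> r) p) = y r p" by simp
  qed
  finally show ?thesis .
qed

lemma chq_mod_pos:
  assumes H: "\<forall>y. 0 \<le> chq y" and xi: "\<xi> \<in> Mmod ns ms"
  shows "cstar_pos (blockalg ms) op_mult (mod_inner ns ms \<xi> (C_op ns ms \<Phi> \<xi>))"
proof -
  let ?N = "tdim ns" and ?M = "tdim ms"
  define G where "G = mod_inner ns ms \<xi> (C_op ns ms \<Phi> \<xi>)"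
  have b\<xi>: "\<And>j. j < ?N \<Longrightarrow> \<xi> j \<in> blockalg ms" using xi unfolding Mmod_def by auto
  have bE: "\<And>g j. same_block ns g j \<Longrightarrow> \<Phi> (munit ?N j g) \<in> blockalg ms"
    by (intro Phi_ba munit_ba) (rule sb_sym)
  have b\<eta>: "C_op ns ms \<Phi> \<xi> g \<in> blockalg ms" if g: "g < ?N" for g
    unfolding C_op_def op_mult_def using g b\<xi> bE by (auto intro!: ba_msum ba_mult)
  have bG: "G \<in> blockalg ms"
    unfolding G_def mod_inner_def op_mult_def using b\<eta> b\<xi> by (auto intro!: ba_msum ba_mult ba_adj)
  have "\<exists>L\<in>carrier_mat ?M ?M. G = adj L * L \<and> (\<forall>r<?M. \<forall>c<?M. L $$ (r,c) \<noteq> 0 \<longrightarrow> same_block ms r c)"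
  proof (rule chol_mat)
    show "G \<in> carrier_mat ?M ?M" using bG by (rule ba_carrier)
    show "\<forall>r c. same_block ms r c \<longrightarrow> same_block ms c r" using sb_sym by blast
    show "\<forall>r c d. same_block ms r c \<longrightarrow> same_block ms c d \<longrightarrow> same_block ms r d" using sb_trans by blast
    show "\<forall>r<?M. \<forall>c<?M. G $$ (r,c) \<noteq> 0 \<longrightarrow> same_block ms r c" using ba_zero_entry[OF bG] by blast
    show "\<forall>v. 0 \<le> qf ?M (\<lambda>r c. G $$ (r,c)) v" unfolding G_def QFG[OF xi] using H by blast
  qed
  then obtain L where L: "L \<in> carrier_mat ?M ?M" "G = adj L * L" "\<forall>r<?M. \<forall>c<?M. L $$ (r,c) \<noteq> 0 \<longrightarrow> same_block ms r c"
    by blast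
  have bL: "L \<in> blockalg ms" using L(1,3) by (intro ba_I) auto
  show ?thesis unfolding cstar_pos_def op_mult_def G_def[symmetric]
    by (intro bexI[of _ "adj L"]) (use L(2) bL in \<open>auto simp: adj_adj intro: ba_adj\<close>)
qed

end

lemma bf_cong: "(\<And>p. p < m \<Longrightarrow> u p = u' p) \<Longrightarrow> (\<And>q. q < m \<Longrightarrow> w q = w' q) \<Longrightarrow> bf m u Y w = bf m u' Y w'"
  unfolding bf_def by (intro sum.cong refl) auto

lemma cnj_if01: "cnj (if P then 1 else 0) = (if P then 1 else 0)" by simp

lemma bf_zero: "bf m u (0\<^sub>m m m) w = 0"
  unfolding bf_def by simp

context phi_ctx
begin

definition rep :: "nat \<Rightarrow> nat" where "rep i = (LEAST p. same_block ns p i)"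

lemma rep_sb: "i < tdim ns \<Longrightarrow> same_block ns (rep i) i"
  unfolding rep_def by (rule LeastI[of _ i]) (rule sb_refl)

lemma rep_lt: "i < tdim ns \<Longrightarrow> rep i < tdim ns"
  using rep_sb sb_lt by blast

lemma rep_eq: "i < tdim ns \<Longrightarrow> g < tdim ns \<Longrightarrow> rep i = rep g \<longleftrightarrow> same_block ns i g"
proof
  assume i: "i < tdim ns" and g: "g < tdim ns" and e: "rep i = rep g"
  have "same_block ns i (rep i)" using rep_sb[OF i] by (rule sb_sym)
  then show "same_block ns i g" using rep_sb[OF g] e sb_trans by metis
next
  assume "same_block ns i g"
  then have "\<And>p. same_block ns p i = same_block ns p g" using sb_trans sb_sym by metis
  then show "rep i = rep g" unfolding rep_def by simp
qed

lemma CP_chq: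
  assumes CP: "completely_positive ns ms \<Phi>"
  shows "0 \<le> chq y"
proof (cases "tdim ns = 0")
  case True then show ?thesis unfolding chq_def by simp
next
  case False
  let ?N = "tdim ns" and ?M = "tdim ms"
  have Npos: "?N > 0" using False by simp
  define X where "X = (\<lambda>j g. if same_block ns j g then munit ?N j g else 0\<^sub>m ?N ?N)"
  define B where "B = (\<lambda>(l::nat) i. if l = 0 then munit ?N (rep i) i else 0\<^sub>m ?N ?N)"
  define b where "b = blockmat ?N ?N B"
  have bX: "\<forall>i<?N. \<forall>j<?N. X i j \<in> blockalg ns" unfolding X_def by (auto intro: munit_ba ba_zero)
  have bB: "\<forall>i<?N. \<forall>j<?N. B i j \<in> blockalg ns" unfolding B_def by (auto intro: munit_ba ba_zero rep_sb)
  have bMk: "b \<in> Mk ?N ?N (blockalg ns)" unfolding Mk_def b_def using bB by blast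
  have cb: "b \<in> carrier_mat (?N * ?N) (?N * ?N)" unfolding b_def blockmat_def by simp
  have acb: "adj b \<in> carrier_mat (?N * ?N) (?N * ?N)" using cb by (rule adj_carrier)
  have bent: "b $$ (l * ?N + t, R) = B l (R div ?N) $$ (t, R mod ?N)" if "l < ?N" "t < ?N" "R < ?N * ?N" for l t R
    unfolding b_def blockmat_def using that idx_lt[of l ?N t ?N] by (simp add: idx_div idx_mod)
  have "blockmat ?N ?N X = adj b * b"
  proof (rule eq_matI)
    show "dim_row (blockmat ?N ?N X) = dim_row (adj b * b)" "dim_col (blockmat ?N ?N X) = dim_col (adj b * b)"
      using acb cb by (auto simp: blockmat_def)
    fix R C assume "R < dim_row (adj b * b)" "C < dim_col (adj b * b)"
    then have R: "R < ?N * ?N" and C: "C < ?N * ?N" using acb cb by auto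
    define j r g s where "j = R div ?N" "r = R mod ?N" "g = C div ?N" "s = C mod ?N"
    have jrgs: "j < ?N" "r < ?N" "g < ?N" "s < ?N" unfolding j_r_g_s_def using R C Npos
      by (auto simp: less_mult_imp_div_less)
    have "(adj b * b) $$ (R,C) = (\<Sum>P<?N * ?N. adj b $$ (R,P) * b $$ (P,C))" by (rule mult_index[OF acb cb R C])
    also have "\<dots> = (\<Sum>P<?N * ?N. cnj (b $$ (P,R)) * b $$ (P,C))"
      by (rule sum.cong[OF refl]) (use R cb in \<open>simp add: adj_index\<close>)
    also have "\<dots> = (\<Sum>l<?N. \<Sum>t<?N. cnj (b $$ (l*?N+t,R)) * b $$ (l*?N+t,C))" by (rule sum_split_kn)
    also have "\<dots> = (\<Sum>l<?N. \<Sum>t<?N. cnj (B l j $$ (t,r)) * B l g $$ (t,s))"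
      unfolding j_r_g_s_def using R C by (intro sum.cong refl) (simp add: bent)
    also have "\<dots> = (\<Sum>l<?N. if l = 0 then (\<Sum>t<?N. (if t = rep j \<and> r = j then 1 else 0) * (if t = rep g \<and> s = g then 1 else 0)) else 0)"
      unfolding B_def using jrgs by (intro sum.cong refl) (auto simp: munit_def cnj_if01)
    also have "\<dots> = (\<Sum>t<?N. (if t = rep j \<and> r = j then 1 else 0) * (if t = rep g \<and> s = g then 1 else 0))"
      using Npos by simp
    also have "\<dots> = (\<Sum>t<?N. if t = rep j then (if r = j \<and> s = g \<and> rep j = rep g then 1 else 0) else 0)"
      by (intro sum.cong refl) auto
    also have "\<dots> = (if r = j \<and> s = g \<and> rep j = rep g then 1 else 0)" using rep_lt[OF jrgs(1)] by simp
    also have "\<dots> = X j g $$ (r,s)" unfolding X_def using jrgs rep_eq[of j g] by (auto simp: munit_def)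
    also have "\<dots> = blockmat ?N ?N X $$ (R,C)" unfolding blockmat_def j_r_g_s_def using R C by simp
    finally show "blockmat ?N ?N X $$ (R,C) = (adj b * b) $$ (R,C)" by simp
  qed
  then have "cstar_pos (Mk ?N ?N (blockalg ns)) (*) (blockmat ?N ?N X)"
    unfolding cstar_pos_def using bMk by blast
  then have "cstar_pos (Mk ?N ?M (blockalg ms)) (*) (blockmat ?N ?M (\<lambda>i j. \<Phi> (X i j)))"
    using CP bX unfolding completely_positive_def by blast
  then obtain c where c: "blockmat ?N ?M (\<lambda>i j. \<Phi> (X i j)) = adj c * c"
    unfolding cstar_pos_def by blast
  have dc: "dim_col c = ?N * ?M"
    using arg_cong[OF c, of dim_col] by (simp add: blockmat_def)
  define V where "V = (\<lambda>R. y (R div ?M) (R mod ?M))"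
  have "0 \<le> qf (?N * ?M) (\<lambda>r s. (adj c * c) $$ (r,s)) V" by (rule qf_adj_mult_nonneg[OF dc])
  also have "\<dots> = qf (?N * ?M) (\<lambda>r s. blockmat ?N ?M (\<lambda>i j. \<Phi> (X i j)) $$ (r,s)) V" unfolding c ..
  also have "\<dots> = (\<Sum>i<?N. \<Sum>j<?N. bf ?M (\<lambda>p. V (i*?M+p)) (\<Phi> (X i j)) (\<lambda>q. V (j*?M+q)))"
    by (rule qf_blockmat)
  also have "\<dots> = (\<Sum>i<?N. \<Sum>j<?N. bf ?M (y i) (\<Phi> (X i j)) (y j))"
    unfolding V_def by (intro sum.cong refl bf_cong) (simp_all add: idx_div idx_mod)
  also have "\<dots> = chq y"
    unfolding chq_def X_def by (intro sum.cong refl) (simp add: Phi_zero bf_zero)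
  finally show ?thesis .
qed

end

lemma bf_sesq:
  "bf m (\<lambda>p. \<Sum>i\<in>I. a i * u i p) Y (\<lambda>q. \<Sum>j\<in>J. b j * w j q) =
   (\<Sum>i\<in>I. \<Sum>j\<in>J. cnj (a i) * b j * bf m (u i) Y (w j))"
proof -
  have "bf m (\<lambda>p. \<Sum>i\<in>I. a i * u i p) Y (\<lambda>q. \<Sum>j\<in>J. b j * w j q) =
     (\<Sum>p<m. \<Sum>q<m. \<Sum>i\<in>I. \<Sum>j\<in>J. cnj (a i) * b j * (cnj (u i p) * Y $$ (p,q) * w j q))"
    unfolding bf_def by (simp add: cnj_sum sum_distrib_left sum_distrib_right mult_ac)
  also have "\<dots> = (\<Sum>i\<in>I. \<Sum>j\<in>J. \<Sum>p<m. \<Sum>q<m. cnj (a i) * b j * (cnj (u i p) * Y $$ (p,q) * w j q))"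
    by (rule swap22)
  also have "\<dots> = (\<Sum>i\<in>I. \<Sum>j\<in>J. cnj (a i) * b j * bf m (u i) Y (w j))"
    unfolding bf_def by (simp add: sum_distrib_left)
  finally show ?thesis .
qed

context phi_ctx
begin

lemma bf_Phi:
  assumes y: "y \<in> blockalg ns"
  shows "bf (tdim ms) u (\<Phi> y) w = (\<Sum>r<tdim ns. \<Sum>s<tdim ns. y $$ (r,s) * bf (tdim ms) u (\<Phi> (munit (tdim ns) r s)) w)"
proof -
  let ?N = "tdim ns" and ?M = "tdim ms"
  have "bf ?M u (\<Phi> y) w = (\<Sum>p<?M. \<Sum>q<?M. \<Sum>r<?N. \<Sum>s<?N. y $$ (r,s) * (cnj (u p) * \<Phi> (munit ?N r s) $$ (p,q) * w q))"
    unfolding bf_def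
  proof (rule sum.cong[OF refl], rule sum.cong[OF refl])
    fix p q assume p: "p \<in> {..<?M}" and q: "q \<in> {..<?M}"
    show "cnj (u p) * \<Phi> y $$ (p,q) * w q = (\<Sum>r<?N. \<Sum>s<?N. y $$ (r,s) * (cnj (u p) * \<Phi> (munit ?N r s) $$ (p,q) * w q))"
      using p q by (simp add: Phi_expand[OF y] sum_distrib_left sum_distrib_right mult_ac)
  qed
  also have "\<dots> = (\<Sum>r<?N. \<Sum>s<?N. \<Sum>p<?M. \<Sum>q<?M. y $$ (r,s) * (cnj (u p) * \<Phi> (munit ?N r s) $$ (p,q) * w q))"
    by (rule swap22)
  also have "\<dots> = (\<Sum>r<?N. \<Sum>s<?N. y $$ (r,s) * bf ?M u (\<Phi> (munit ?N r s)) w)"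
    unfolding bf_def by (simp add: sum_distrib_left)
  finally show ?thesis .
qed

lemma chq_CP:
  assumes H: "\<forall>y. 0 \<le> chq y"
  shows "completely_positive ns ms \<Phi>"
  unfolding completely_positive_def
proof (intro allI impI)
  let ?N = "tdim ns" and ?M = "tdim ms"
  fix k X
  assume bX: "\<forall>i<k. \<forall>j<k. X i j \<in> blockalg ns"
    and pos: "cstar_pos (Mk k ?N (blockalg ns)) (*) (blockmat k ?N X)"
  obtain b where bMk: "b \<in> Mk k ?N (blockalg ns)" and bX2: "blockmat k ?N X = adj b * b"
    using pos unfolding cstar_pos_def by blast
  obtain B where bB: "b = blockmat k ?N B" and BI: "\<forall>l<k. \<forall>i<k. B l i \<in> blockalg ns"
    using bMk unfolding Mk_def by blast
  have cb: "b \<in> carrier_mat (k * ?N) (k * ?N)" unfolding bB blockmat_def by simp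
  have acb: "adj b \<in> carrier_mat (k * ?N) (k * ?N)" using cb by (rule adj_carrier)
  have bent: "b $$ (l * ?N + t, i * ?N + r) = B l i $$ (t, r)" if "l < k" "t < ?N" "i < k" "r < ?N" for l t i r
    unfolding bB blockmat_def using that idx_lt[of l k t ?N] idx_lt[of i k r ?N] by (simp add: idx_div idx_mod)
  have Xent: "X i j $$ (r,s) = (\<Sum>l<k. \<Sum>t<?N. cnj (B l i $$ (t,r)) * B l j $$ (t,s))"
    if ij: "i < k" "j < k" and rs: "r < ?N" "s < ?N" for i j r s
  proof -
    have R: "i * ?N + r < k * ?N" and C: "j * ?N + s < k * ?N" using idx_lt ij rs by auto
    have "X i j $$ (r,s) = blockmat k ?N X $$ (i * ?N + r, j * ?N + s)"
      unfolding blockmat_def using R C rs by (simp add: idx_div idx_mod)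
    also have "\<dots> = (\<Sum>P<k * ?N. adj b $$ (i * ?N + r, P) * b $$ (P, j * ?N + s))"
      unfolding bX2 by (rule mult_index[OF acb cb R C])
    also have "\<dots> = (\<Sum>P<k * ?N. cnj (b $$ (P, i * ?N + r)) * b $$ (P, j * ?N + s))"
      by (rule sum.cong[OF refl]) (use R cb in \<open>simp add: adj_index\<close>)
    also have "\<dots> = (\<Sum>l<k. \<Sum>t<?N. cnj (b $$ (l * ?N + t, i * ?N + r)) * b $$ (l * ?N + t, j * ?N + s))"
      by (rule sum_split_kn)
    also have "\<dots> = (\<Sum>l<k. \<Sum>t<?N. cnj (B l i $$ (t,r)) * B l j $$ (t,s))"
      using ij rs by (intro sum.cong refl) (simp add: bent)
    finally show ?thesis .
  qed
  define T where "T = blockmat k ?M (\<lambda>i j. \<Phi> (X i j))"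
  have cT: "T \<in> carrier_mat (k * ?M) (k * ?M)" unfolding T_def blockmat_def by simp
  have psd: "\<forall>v. 0 \<le> qf (k * ?M) (\<lambda>r c. T $$ (r,c)) v"
  proof
    fix v :: "nat \<Rightarrow> complex"
    define vv where "vv = (\<lambda>i p. v (i * ?M + p))"
    define E where "E = (\<lambda>r s. \<Phi> (munit ?N r s))"
    define F where "F = (\<lambda>i j r s l t. cnj (B l i $$ (t,r)) * B l j $$ (t,s) * bf ?M (vv i) (E r s) (vv j))"
    define x where "x = (\<lambda>l t r p. \<Sum>i<k. B l i $$ (t,r) * vv i p)"
    have "qf (k * ?M) (\<lambda>r c. T $$ (r,c)) v = (\<Sum>i<k. \<Sum>j<k. bf ?M (vv i) (\<Phi> (X i j)) (vv j))"
      unfolding T_def vv_def by (rule qf_blockmat)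
    also have "\<dots> = (\<Sum>i<k. \<Sum>j<k. \<Sum>r<?N. \<Sum>s<?N. X i j $$ (r,s) * bf ?M (vv i) (E r s) (vv j))"
      unfolding E_def using bX by (intro sum.cong refl) (simp add: bf_Phi)
    also have "\<dots> = (\<Sum>i<k. \<Sum>j<k. \<Sum>r<?N. \<Sum>s<?N. \<Sum>l<k. \<Sum>t<?N. F i j r s l t)"
      unfolding F_def by (intro sum.cong refl) (simp add: Xent sum_distrib_right)
    also have "\<dots> = (\<Sum>i<k. \<Sum>j<k. \<Sum>l<k. \<Sum>t<?N. \<Sum>r<?N. \<Sum>s<?N. F i j r s l t)"
      by (rule sum.cong[OF refl], rule sum.cong[OF refl], rule swap22)
    also have "\<dots> = (\<Sum>l<k. \<Sum>t<?N. \<Sum>i<k. \<Sum>j<k. \<Sum>r<?N. \<Sum>s<?N. F i j r s l t)"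
      by (rule swap22)
    also have "\<dots> = (\<Sum>l<k. \<Sum>t<?N. \<Sum>r<?N. \<Sum>s<?N. \<Sum>i<k. \<Sum>j<k. F i j r s l t)"
      by (rule sum.cong[OF refl], rule sum.cong[OF refl], rule swap22)
    also have "\<dots> = (\<Sum>l<k. \<Sum>t<?N. chq (x l t))"
    proof (rule sum.cong[OF refl], rule sum.cong[OF refl])
      fix l t assume l: "l \<in> {..<k}" and t: "t \<in> {..<?N}"
      show "(\<Sum>r<?N. \<Sum>s<?N. \<Sum>i<k. \<Sum>j<k. F i j r s l t) = chq (x l t)"
        unfolding chq_def
      proof (rule sum.cong[OF refl], rule sum.cong[OF refl])
        fix r s assume r: "r \<in> {..<?N}" and s: "s \<in> {..<?N}"
        have e: "bf ?M (x l t r) (E r s) (x l t s) = (\<Sum>i<k. \<Sum>j<k. F i j r s l t)"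
          unfolding x_def F_def by (rule bf_sesq)
        show "(\<Sum>i<k. \<Sum>j<k. F i j r s l t) =
          (if same_block ns r s then bf ?M (x l t r) (\<Phi> (munit ?N r s)) (x l t s) else 0)"
        proof (cases "same_block ns r s")
          case True then show ?thesis using e unfolding E_def by simp
        next
          case False
          have "F i j r s l t = 0" if i: "i < k" and j: "j < k" for i j
          proof (cases "same_block ns t r")
            case True
            then have "\<not> same_block ns t s" using False sb_trans sb_sym by metis
            then have "B l j $$ (t,s) = 0" using ba_zero_entry BI l j t s by blast
            then show ?thesis unfolding F_def by simp
          next
            case False
            then have "B l i $$ (t,r) = 0" using ba_zero_entry BI l i t r by blast
            then show ?thesis unfolding F_def by simp
          qed
          then show ?thesis using False by simp
        qed
      qed
    qed
    also have "0 \<le> \<dots>" using H by (intro sum_nonneg) auto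
    finally show "0 \<le> qf (k * ?M) (\<lambda>r c. T $$ (r,c)) v" .
  qed
  have "\<exists>L\<in>carrier_mat (k * ?M) (k * ?M). T = adj L * L \<and>
     (\<forall>r<k * ?M. \<forall>c<k * ?M. L $$ (r,c) \<noteq> 0 \<longrightarrow> same_block ms (r mod ?M) (c mod ?M))"
  proof (rule chol_mat[OF cT _ _ _ psd])
    show "\<forall>r c. same_block ms (r mod ?M) (c mod ?M) \<longrightarrow> same_block ms (c mod ?M) (r mod ?M)" using sb_sym by blast
    show "\<forall>r c d. same_block ms (r mod ?M) (c mod ?M) \<longrightarrow> same_block ms (c mod ?M) (d mod ?M) \<longrightarrow> same_block ms (r mod ?M) (d mod ?M)"
      using sb_trans by blast
    show "\<forall>r<k * ?M. \<forall>c<k * ?M. T $$ (r,c) \<noteq> 0 \<longrightarrow> same_block ms (r mod ?M) (c mod ?M)"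
    proof (intro allI impI)
      fix r c assume r: "r < k * ?M" and c: "c < k * ?M" and ne: "T $$ (r,c) \<noteq> 0"
      have M0: "?M > 0" using r by (cases "?M = 0") auto
      have dv: "r div ?M < k" "c div ?M < k" using r c M0 by (auto simp: less_mult_imp_div_less)
      have md: "r mod ?M < ?M" "c mod ?M < ?M" using M0 by auto
      have "\<Phi> (X (r div ?M) (c div ?M)) \<in> blockalg ms" using bX dv by (intro Phi_ba) auto
      moreover have "\<Phi> (X (r div ?M) (c div ?M)) $$ (r mod ?M, c mod ?M) \<noteq> 0"
        using ne r c unfolding T_def blockmat_def by simp
      ultimately show "same_block ms (r mod ?M) (c mod ?M)" using ba_zero_entry md by blast
    qed
  qed
  then obtain L where L: "L \<in> carrier_mat (k * ?M) (k * ?M)" "T = adj L * L"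
    "\<forall>r<k * ?M. \<forall>c<k * ?M. L $$ (r,c) \<noteq> 0 \<longrightarrow> same_block ms (r mod ?M) (c mod ?M)" by blast
  define C where "C = (\<lambda>i j. mat ?M ?M (\<lambda>(r,s). L $$ (i * ?M + r, j * ?M + s)))"
  have LC: "L = blockmat k ?M C"
  proof (rule eq_matI)
    show "dim_row L = dim_row (blockmat k ?M C)" "dim_col L = dim_col (blockmat k ?M C)"
      using L(1) by (auto simp: blockmat_def)
    fix r c assume r: "r < dim_row (blockmat k ?M C)" and c: "c < dim_col (blockmat k ?M C)"
    then have r': "r < k * ?M" and c': "c < k * ?M" by (auto simp: blockmat_def)
    have M0: "?M > 0" using r' by (cases "?M = 0") auto
    have "blockmat k ?M C $$ (r,c) = L $$ ((r div ?M) * ?M + r mod ?M, (c div ?M) * ?M + c mod ?M)"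
      unfolding blockmat_def C_def using r' c' M0 by simp
    also have "\<dots> = L $$ (r,c)" by simp
    finally show "L $$ (r,c) = blockmat k ?M C $$ (r,c)" by simp
  qed
  have CI: "\<forall>i<k. \<forall>j<k. C i j \<in> blockalg ms"
  proof (intro allI impI)
    fix i j assume i: "i < k" and j: "j < k"
    show "C i j \<in> blockalg ms"
    proof (rule ba_I)
      show "C i j \<in> carrier_mat ?M ?M" unfolding C_def by simp
      fix r s assume r: "r < ?M" and s: "s < ?M" and n: "\<not> same_block ms r s"
      have "i * ?M + r < k * ?M" "j * ?M + s < k * ?M" using idx_lt i j r s by auto
      moreover have "(i * ?M + r) mod ?M = r" "(j * ?M + s) mod ?M = s" using r s by (simp_all add: idx_mod)
      ultimately have "L $$ (i * ?M + r, j * ?M + s) = 0" using L(3) n by metis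
      then show "C i j $$ (r,s) = 0" unfolding C_def using r s by simp
    qed
  qed
  have "L \<in> Mk k ?M (blockalg ms)" unfolding Mk_def using LC CI by blast
  then show "cstar_pos (Mk k ?M (blockalg ms)) (*) (blockmat k ?M (\<lambda>i j. \<Phi> (X i j)))"
    unfolding cstar_pos_def T_def[symmetric] using L(2) by blast
qed

end

theorem proposition3p6:
  fixes ns ms :: "nat list" and \<Phi> :: "complex mat \<Rightarrow> complex mat"
  assumes "linear_on (blockalg ns) \<Phi>"
    and "\<Phi> ` blockalg ns \<subseteq> blockalg ms"
  shows "completely_positive ns ms \<Phi> \<longleftrightarrow>
    (\<forall>\<xi>\<in>Mmod ns ms. cstar_pos (blockalg ms) op_mult (mod_inner ns ms \<xi> (C_op ns ms \<Phi> \<xi>)))"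
proof -
  interpret phi_ctx ns ms \<Phi> using assms by unfold_locales
  show ?thesis
  proof
    assume CP: "completely_positive ns ms \<Phi>"
    have "\<forall>y. 0 \<le> chq y" using CP_chq[OF CP] by blast
    then show "\<forall>\<xi>\<in>Mmod ns ms. cstar_pos (blockalg ms) op_mult (mod_inner ns ms \<xi> (C_op ns ms \<Phi> \<xi>))"
      using chq_mod_pos by blast
  next
    assume H: "\<forall>\<xi>\<in>Mmod ns ms. cstar_pos (blockalg ms) op_mult (mod_inner ns ms \<xi> (C_op ns ms \<Phi> \<xi>))"
    have "\<forall>y. 0 \<le> chq y" using mod_pos_chq[OF H] by blast
    then show "completely_positive ns ms \<Phi>" by (rule chq_CP)
  qed
qed

end
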